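(* Let $a,b,c$ be real numbers with $|1-c|<1$, $|c-a-b|<1$, $|b-a|<1$. Let $\underline{u}_0,\underline{u}_1$ be linearly independent solutions of $\underline{u}''-q(x)\underline{u}=0$ on $X_+=\{x\in\mathbf{C}\setminus\{0,1\}\mid \operatorname{Im}x\ge 0\}$, and set $S=\underline{u}_1/\underline{u}_0$ and $DS=\underline{u}_1'/\underline{u}_0'$ (maps $X_+\to\mathbf{P}^1$). Then \[ S(0)=DS(0),\qquad S(1)=DS(1),\qquad S(\infty)=DS(\infty), \] where the values at $0,1,\infty$ are the limits as $x$ tends to these points within $X_+$.
   Context: The hypergeometric equation is $x(1-x)u''+\{c-(a+b+1)x\}u'-abu=0$. Its exponent differences are $\mu_0=1-c$, $\mu_1=c-a-b$, $\mu_\infty=b-a$. Putting $\underline{u}=N u$ with $N=\sqrt{x^c(1-x)^{a+b+1-c}}$ transforms it into the SL-form $\underline{u}''-q\underline{u}=0$ with \[ q=-\frac14\,\frac{(1-\mu_\infty^2)x^2+(\mu_\infty^2+\mu_0^2-\mu_1^2-1)x+1-\mu_0^2}{x^2(1-x)^2}. \] $S$ is the Schwarz map and $DS$ the derived Schwarz map; $\mathbf{P}^1=\mathbf{C}\cup\{\infty\}$. *)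

theory Defs
  imports "HOL-Analysis.Analysis"
begin

text \<open>Exponent differences of the hypergeometric equation.\<close>
definition mu0 :: "real \<Rightarrow> real \<Rightarrow> real \<Rightarrow> real" where
  "mu0 a b c = 1 - c"
definition mu1 :: "real \<Rightarrow> real \<Rightarrow> real \<Rightarrow> real" where
  "mu1 a b c = c - a - b"
definition muinf :: "real \<Rightarrow> real \<Rightarrow> real \<Rightarrow> real" where
  "muinf a b c = b - a"

definition qpot :: "real \<Rightarrow> real \<Rightarrow> real \<Rightarrow> complex \<Rightarrow> complex" where
  "qpot a b c x =
     - (1/4) * ((1 - complex_of_real ((muinf a b c)^2)) * x^2
        + complex_of_real ((muinf a b c)^2 + (mu0 a b c)^2 - (mu1 a b c)^2 - 1) * x
        + (1 - complex_of_real ((mu0 a b c)^2)))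
       / (x^2 * (1 - x)^2)"

definition Xplus :: "complex set" where
  "Xplus = {x. x \<noteq> 0 \<and> x \<noteq> 1 \<and> Im x \<ge> 0}"

definition sl_solution :: "real \<Rightarrow> real \<Rightarrow> real \<Rightarrow> (complex \<Rightarrow> complex) \<Rightarrow> bool" where
  "sl_solution a b c u \<longleftrightarrow>
     (\<exists>U. open U \<and> Xplus \<subseteq> U \<and> 0 \<notin> U \<and> 1 \<notin> U \<and> u holomorphic_on U \<and>
          (\<forall>x\<in>U. deriv (deriv u) x - qpot a b c x * u x = 0))"

text \<open>Points of P^1 in homogeneous coordinates (z0, z1) (nonzero), the
  point [z0:z1] corresponding to the affine value z1/z0 (infinity if z0 = 0).
  Chordal (Fubini-Study) distance on P^1.\<close>
definition chordal :: "complex \<times> complex \<Rightarrow> complex \<times> complex \<Rightarrow> real" where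
  "chordal p r = cmod (fst p * snd r - snd p * fst r)
     / (sqrt ((cmod (fst p))^2 + (cmod (snd p))^2) * sqrt ((cmod (fst r))^2 + (cmod (snd r))^2))"

definition P1_tendsto :: "('a \<Rightarrow> complex \<times> complex) \<Rightarrow> complex \<times> complex \<Rightarrow> 'a filter \<Rightarrow> bool" where
  "P1_tendsto f p F \<longleftrightarrow> p \<noteq> (0, 0) \<and> ((\<lambda>x. chordal (f x) p) \<longlongrightarrow> 0) F"

end

theory Submission
  imports Defs "HOL-Complex_Analysis.Complex_Analysis"
begin

fun frob :: "(nat \<Rightarrow> complex) \<Rightarrow> real \<Rightarrow> nat \<Rightarrow> complex" where
  "frob b r n = (if n = 0 then 1 else (\<Sum>k<n. b (n - 1 - k) * frob b r k) / (of_nat n * (of_nat n - 1 + 2 * of_real r)))"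

declare frob.simps[simp del]

lemma geom_half_le2: "(\<Sum>j<n. (1/2::real)^j) \<le> 2"
proof -
  have "(\<Sum>j<n. (1/2::real)^j) = (1 - (1/2)^n) / (1 - 1/2)"
    by (subst sum_gp_strict) simp
  also have "\<dots> \<le> 2" by simp
  finally show ?thesis .
qed

lemma frob_bound:
  fixes b :: "nat \<Rightarrow> complex" and r K L :: real
  assumes r: "r > 0" and K: "K \<ge> 0" and L: "L \<ge> 1" and KL: "K \<le> r * L"
    and bb: "\<And>j. norm (b j) \<le> K * (L/2)^j"
  shows "norm (frob b r n) \<le> L ^ n"
proof (induction n rule: less_induct)
  case (less n)
  show ?case
  proof (cases "n = 0")
    case True then show ?thesis by (simp add: frob.simps)
  next
    case False
    then obtain m where m: "n = Suc m" by (cases n) auto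
    have s: "norm (\<Sum>k<n. b (n - 1 - k) * frob b r k) \<le> 2 * K * L ^ m"
    proof -
      have "norm (\<Sum>k<n. b (n - 1 - k) * frob b r k) \<le> (\<Sum>k<n. norm (b (n - 1 - k) * frob b r k))"
        by (rule norm_sum)
      also have "\<dots> \<le> (\<Sum>k<n. K * L^m * (1/2)^(m - k))"
      proof (rule sum_mono)
        fix k assume k: "k \<in> {..<n}"
        have "norm (b (n - 1 - k) * frob b r k) = norm (b (m - k)) * norm (frob b r k)"
          by (simp add: m norm_mult)
        also have "\<dots> \<le> K * (L/2)^(m-k) * L^k"
          using k m K L by (intro mult_mono bb less.IH) auto
        also have "K * (L/2)^(m-k) * L^k = K * L^m * (1/2)^(m - k)"
        proof -
          have "L^m = L^(m-k) * L^k" using k m by (simp add: power_add[symmetric])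
          then show ?thesis by (simp add: power_divide field_simps)
        qed
        finally show "norm (b (n - 1 - k) * frob b r k) \<le> K * L^m * (1/2)^(m - k)" .
      qed
      also have "\<dots> = K * L^m * (\<Sum>k<n. (1/2::real)^(m - k))"
        by (simp add: sum_distrib_left)
      also have "(\<Sum>k<n. (1/2::real)^(m - k)) = (\<Sum>k<n. (1/2::real)^k)"
        using sum.nat_diff_reindex[of "\<lambda>k. (1/2::real)^k" n] by (simp add: m)
      also have "K * L^m * \<dots> \<le> K * L^m * 2"
        using K L by (intro mult_left_mono geom_half_le2) auto
      finally show ?thesis by simp
    qed
    have d: "norm (of_nat n * (of_nat n - 1 + 2 * of_real r) :: complex) \<ge> 2 * r"
    proof -
      have "(of_nat n * (of_nat n - 1 + 2 * of_real r) :: complex) = of_real (real n * (real n - 1 + 2 * r))"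
        by simp
      moreover have "real n * (real n - 1 + 2 * r) \<ge> 2 * r"
      proof -
        have "real n \<ge> 1" using m by simp
        moreover have "real n - 1 + 2 * r \<ge> 2 * r" using m by simp
        ultimately have "real n * (real n - 1 + 2 * r) \<ge> 1 * (2 * r)"
          using r by (intro mult_mono) auto
        then show ?thesis by simp
      qed
      ultimately show ?thesis using r by (simp del: of_real_mult of_real_add of_real_diff)
    qed
    have "norm (frob b r n) = norm (\<Sum>k<n. b (n - 1 - k) * frob b r k) / norm (of_nat n * (of_nat n - 1 + 2 * of_real r) :: complex)"
      using False by (subst frob.simps) (simp add: norm_divide)
    also have "\<dots> \<le> (2 * K * L ^ m) / (2 * r)"
      using s d r K L by (intro frac_le) auto
    also have "\<dots> = (K / r) * L^m" using r by simp
    also have "\<dots> \<le> L * L^m"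
      using KL r L by (intro mult_right_mono) (auto simp: field_simps)
    finally show ?thesis by (simp add: m)
  qed
qed

lemma frob_fps_eq:
  fixes F :: "complex fps" and \<rho> :: real
  assumes rho: "\<rho> > 0"
  defines "H \<equiv> Abs_fps (frob (fps_nth F) \<rho>)"
  shows "fps_X * fps_deriv (fps_deriv H) + fps_const (of_real (2*\<rho>)) * fps_deriv H = H * F"
proof (rule fps_ext)
  fix n
  let ?h = "frob (fps_nth F) \<rho>"
  have den: "(of_nat (Suc n) * (of_nat (Suc n) - 1 + 2 * of_real \<rho>) :: complex) \<noteq> 0"
  proof -
    have "(of_nat (Suc n) * (of_nat (Suc n) - 1 + 2 * of_real \<rho>) :: complex) = of_real (real (Suc n) * (real n + 2 * \<rho>))"
      by simp
    moreover have "real (Suc n) * (real n + 2 * \<rho>) > 0" using rho by (intro mult_pos_pos) auto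
    ultimately show ?thesis by (metis of_real_eq_0_iff less_irrefl)
  qed
  have rec: "of_nat (Suc n) * (of_nat (Suc n) - 1 + 2 * of_real \<rho>) * ?h (Suc n) = (\<Sum>k<Suc n. fps_nth F (n - k) * ?h k)"
    using den by (subst frob.simps) (simp add: field_simps)
  have lhs: "fps_nth (fps_X * fps_deriv (fps_deriv H) + fps_const (of_real (2*\<rho>)) * fps_deriv H) n
      = of_nat (Suc n) * (of_nat (Suc n) - 1 + 2 * of_real \<rho>) * ?h (Suc n)"
    by (cases n) (simp_all add: H_def fps_X_mult_nth fps_deriv_nth algebra_simps)
  have rhs: "fps_nth (H * F) n = (\<Sum>k\<le>n. ?h k * fps_nth F (n - k))"
    by (simp add: fps_mult_nth H_def atLeast0AtMost)
  show "fps_nth (fps_X * fps_deriv (fps_deriv H) + fps_const (of_real (2*\<rho>)) * fps_deriv H) n = fps_nth (H * F) n"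
  proof -
    have "(\<Sum>k<Suc n. fps_nth F (n - k) * ?h k) = (\<Sum>k\<le>n. ?h k * fps_nth F (n - k))"
      unfolding lessThan_Suc_atMost by (intro sum.cong refl) (simp add: mult.commute)
    then show ?thesis using lhs rhs rec by simp
  qed
qed

lemma frobenius:
  fixes A :: "complex \<Rightarrow> complex" and R \<rho> :: real
  assumes holA: "A holomorphic_on ball 0 R" and R: "R > 0" and rho: "\<rho> > 0"
  obtains r h h1 h2 where "0 < r" "r \<le> R" "h 0 = 1"
    "\<And>t. t \<in> ball 0 r \<Longrightarrow> (h has_field_derivative h1 t) (at t)"
    "\<And>t. t \<in> ball 0 r \<Longrightarrow> (h1 has_field_derivative h2 t) (at t)"
    "\<And>t. t \<in> ball 0 r \<Longrightarrow> t^2 * h2 t + 2 * of_real \<rho> * t * h1 t = (A t - A 0) * h t"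
proof -
  define Bf where "Bf = (\<lambda>z. if z = 0 then deriv A 0 else (A z - A 0) / (z - 0))"
  have holB: "Bf holomorphic_on ball 0 R"
    unfolding Bf_def by (rule pole_lemma_open[OF holA open_ball])
  have Bt: "t * Bf t = A t - A 0" for t
    by (simp add: Bf_def)
  define F where "F = fps_expansion Bf 0"
  have holB': "Bf holomorphic_on eball 0 (ereal R)" using holB by simp
  have radF: "fps_conv_radius F \<ge> ereal R"
    unfolding F_def by (rule conv_radius_fps_expansion[OF holB'])
  have evF: "eval_fps F t = Bf t" if "norm t < R" for t
    using eval_fps_expansion'[OF holB', of t] that by (simp add: F_def)
  define s where "s = R / 2"
  have s: "s > 0" "s < R" using R by (auto simp: s_def)
  have "ereal (norm (of_real s :: complex)) < fps_conv_radius F"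
    using s radF by (simp add: less_le_trans[of "ereal s" "ereal R"])
  then have "summable (\<lambda>n. fps_nth F n * of_real s ^ n)"
    by (rule summable_fps)
  then have "Bseq (\<lambda>n. fps_nth F n * of_real s ^ n)"
    by (intro convergent_imp_Bseq) (auto intro: convergentI summable_LIMSEQ_zero)
  then obtain K where K: "K > 0" "\<And>n. norm (fps_nth F n * of_real s ^ n) \<le> K"
    by (auto elim: BseqE)
  have bK: "norm (fps_nth F n) \<le> K * (1/s)^n" for n
  proof -
    have "norm (fps_nth F n) * s^n \<le> K" using K(2)[of n] s by (simp add: norm_mult norm_power)
    then show ?thesis using s by (simp add: field_simps power_divide)
  qed
  define L where "L = max (max (2/s) (K/\<rho>)) 1"
  have L: "L \<ge> 1" "L \<ge> 2/s" "L \<ge> K/\<rho>" by (auto simp: L_def)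
  have KL: "K \<le> \<rho> * L" using L(3) rho by (simp add: field_simps)
  have bb: "norm (fps_nth F j) \<le> K * (L/2)^j" for j
  proof -
    have "1/s \<le> L/2" using L(2) s by (simp add: field_simps)
    then have "(1/s)^j \<le> (L/2)^j" using s by (intro power_mono) auto
    then show ?thesis using bK[of j] K by (meson mult_left_mono less_imp_le order_trans)
  qed
  have hb: "norm (frob (fps_nth F) \<rho> n) \<le> L ^ n" for n
    by (rule frob_bound[OF rho less_imp_le[OF K(1)] L(1) KL bb])
  define H where "H = Abs_fps (frob (fps_nth F) \<rho>)"
  have radH: "fps_conv_radius H \<ge> ereal (1/L)"
    unfolding fps_conv_radius_def
  proof (rule conv_radius_geI_ex)
    fix r' :: real assume r': "0 < r'" "ereal r' < ereal (1/L)"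
    have rL: "r' * L < 1" using r' L by (simp add: field_simps)
    have "summable (\<lambda>n. (r' * L)^n)" using rL r' L by (intro summable_geometric) auto
    moreover have "norm (fps_nth H n * of_real r' ^ n) \<le> (r' * L)^n" for n
    proof -
      have "norm (fps_nth H n * of_real r' ^ n) = norm (frob (fps_nth F) \<rho> n) * r'^n"
        using r' by (simp add: H_def norm_mult norm_power)
      also have "\<dots> \<le> L^n * r'^n" using r' by (intro mult_right_mono hb) auto
      finally show ?thesis by (simp add: power_mult_distrib mult.commute)
    qed
    ultimately have "summable (\<lambda>n. fps_nth H n * of_real r' ^ n)"
      by (rule summable_comparison_test'[where N=0])
    then show "\<exists>z::complex. norm z = r' \<and> summable (\<lambda>n. fps_nth H n * z ^ n)"
      using r' by (intro exI[of _ "of_real r'"]) auto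
  qed
  define r where "r = 1 / L"
  have r: "r > 0" "r \<le> R"
  proof -
    show "r > 0" using L by (simp add: r_def)
    have "1/L \<le> 1/(2/s)" using L s by (intro divide_left_mono) auto
    then show "r \<le> R" using s by (simp add: r_def s_def)
  qed
  have rad: "ereal (norm t) < fps_conv_radius H" "ereal (norm t) < fps_conv_radius (fps_deriv H)"
     "ereal (norm t) < fps_conv_radius (fps_deriv (fps_deriv H))" "norm t < R"
    "ereal (norm t) < fps_conv_radius F" if "t \<in> ball 0 r" for t
  proof -
    have t: "norm t < r" using that by simp
    show 1: "ereal (norm t) < fps_conv_radius H" using t radH by (simp add: r_def less_le_trans[of "ereal (norm t)" "ereal (1/L)"])
    show 2: "ereal (norm t) < fps_conv_radius (fps_deriv H)" using 1 fps_conv_radius_deriv[of H] by simp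
    show "ereal (norm t) < fps_conv_radius (fps_deriv (fps_deriv H))" using 2 fps_conv_radius_deriv[of "fps_deriv H"] by simp
    show 4: "norm t < R" using t r by simp
    show "ereal (norm t) < fps_conv_radius F" using 4 radF by (simp add: less_le_trans[of "ereal (norm t)" "ereal R"])
  qed
  show ?thesis
  proof (rule that[of r "eval_fps H" "eval_fps (fps_deriv H)" "eval_fps (fps_deriv (fps_deriv H))"])
    show "0 < r" "r \<le> R" by (rule r)+
    show "eval_fps H 0 = 1" by (simp add: eval_fps_at_0 H_def frob.simps)
    fix t :: complex assume t: "t \<in> ball 0 r"
    show "(eval_fps H has_field_derivative eval_fps (fps_deriv H) t) (at t)"
      using rad(1)[OF t] by (rule has_field_derivative_eval_fps)
    show "(eval_fps (fps_deriv H) has_field_derivative eval_fps (fps_deriv (fps_deriv H)) t) (at t)"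
      using rad(2)[OF t] by (rule has_field_derivative_eval_fps)
    have "eval_fps (fps_X * fps_deriv (fps_deriv H) + fps_const (of_real (2*\<rho>)) * fps_deriv H) t
        = eval_fps (H * F) t" using frob_fps_eq[OF rho, of F] by (simp add: H_def)
    moreover have "eval_fps (fps_X * fps_deriv (fps_deriv H) + fps_const (of_real (2*\<rho>)) * fps_deriv H) t
        = t * eval_fps (fps_deriv (fps_deriv H)) t + of_real (2*\<rho>) * eval_fps (fps_deriv H) t"
    proof -
      have r1: "ereal (norm t) < fps_conv_radius (fps_X * fps_deriv (fps_deriv H))"
        using rad(3)[OF t] fps_conv_radius_mult[of fps_X "fps_deriv (fps_deriv H)"]
        by (simp add: less_le_trans[of "ereal (norm t)"])
      have r2: "ereal (norm t) < fps_conv_radius (fps_const (of_real (2*\<rho>)) * fps_deriv H)"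
        using rad(2)[OF t] fps_conv_radius_mult[of "fps_const (of_real (2*\<rho>))" "fps_deriv H"]
        by (simp add: less_le_trans[of "ereal (norm t)"])
      show ?thesis
        apply (subst eval_fps_add[OF r1 r2])
        apply (subst eval_fps_mult)
          apply simp
         apply (rule rad(3)[OF t])
        apply (subst eval_fps_mult)
          apply simp
         apply (rule rad(2)[OF t])
        apply simp
        done
    qed
    moreover have "eval_fps (H * F) t = eval_fps H t * Bf t"
      using rad[OF t] by (simp add: eval_fps_mult evF)
    ultimately have "t * eval_fps (fps_deriv (fps_deriv H)) t + of_real (2*\<rho>) * eval_fps (fps_deriv H) t
       = eval_fps H t * Bf t" by simp
    then have "t * (t * eval_fps (fps_deriv (fps_deriv H)) t + of_real (2*\<rho>) * eval_fps (fps_deriv H) t)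
       = (t * Bf t) * eval_fps H t" by simp
    then show "t^2 * eval_fps (fps_deriv (fps_deriv H)) t + 2 * of_real \<rho> * t * eval_fps (fps_deriv H) t
       = (A t - A 0) * eval_fps H t"
      unfolding Bt by (simp add: algebra_simps power2_eq_square)
  qed
qed

definition Hs :: "real \<Rightarrow> real \<Rightarrow> complex set" where
  "Hs \<sigma> r = {t. t \<noteq> 0 \<and> cmod t < r \<and> 0 \<le> \<sigma> * Im t}"

definition sol :: "(complex \<Rightarrow> complex) \<Rightarrow> complex set \<Rightarrow> (complex \<Rightarrow> complex) \<Rightarrow> (complex \<Rightarrow> complex) \<Rightarrow> bool" where
  "sol Q V f f1 \<longleftrightarrow> (\<forall>t\<in>V. (f has_field_derivative f1 t) (at t) \<and> (f1 has_field_derivative Q t * f t) (at t))"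

lemma Hs_connected:
  assumes "\<sigma> = 1 \<or> \<sigma> = -1" "r > 0"
  shows "connected (Hs \<sigma> r)"
proof -
  define a where "a = of_real \<sigma> * \<i> * of_real (r/2)"
  have a: "a \<in> Hs \<sigma> r" using assms by (auto simp: Hs_def a_def norm_mult)
  have "closed_segment a x \<subseteq> Hs \<sigma> r" if x: "x \<in> Hs \<sigma> r" for x
  proof
    fix z assume "z \<in> closed_segment a x"
    then obtain u where u: "0 \<le> u" "u \<le> 1" "z = (1 - u) *\<^sub>R a + u *\<^sub>R x"
      by (auto simp: closed_segment_def)
    have na: "cmod a < r" using a by (simp add: Hs_def)
    have nx: "cmod x < r" using x by (simp add: Hs_def)
    have "cmod z \<le> (1 - u) * cmod a + u * cmod x"
    proof -
      have "cmod z \<le> norm ((1 - u) *\<^sub>R a) + norm (u *\<^sub>R x)"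
        unfolding u(3) by (rule norm_triangle_ineq)
      then show ?thesis using u by simp
    qed
    also have "\<dots> < r"
    proof (cases "u = 0")
      case True then show ?thesis using na by simp
    next
      case False
      have "(1 - u) * cmod a \<le> (1 - u) * r" using u na by (intro mult_left_mono) auto
      moreover have "u * cmod x < u * r" using u False nx by (intro mult_strict_left_mono) auto
      ultimately show ?thesis by (simp add: algebra_simps)
    qed
    finally have nz: "cmod z < r" .
    have sa: "\<sigma> * Im a = r/2" using assms by (auto simp: a_def)
    have sx: "0 \<le> \<sigma> * Im x" using x by (simp add: Hs_def)
    have sz: "\<sigma> * Im z = (1 - u) * (r/2) + u * (\<sigma> * Im x)"
    proof -
      have "Im z = (1 - u) * Im a + u * Im x" using u(3) by simp
      then have "\<sigma> * Im z = \<sigma> * ((1 - u) * Im a) + \<sigma> * (u * Im x)" by (simp only: distrib_left)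
      also have "\<sigma> * ((1 - u) * Im a) = (1 - u) * (\<sigma> * Im a)" by (simp only: mult.left_commute)
      also have "\<sigma> * (u * Im x) = u * (\<sigma> * Im x)" by (simp only: mult.left_commute)
      finally show ?thesis using sa by simp
    qed
    have "0 \<le> \<sigma> * Im z" using sz u sx assms by simp
    moreover have "z \<noteq> 0"
    proof (cases "u = 1")
      case True then show ?thesis using u x by (simp add: Hs_def)
    next
      case False
      have "(1 - u) * (r/2) > 0" using u False assms by simp
      moreover have "u * (\<sigma> * Im x) \<ge> 0" using u sx by simp
      ultimately have "\<sigma> * Im z > 0" using sz by linarith
      then show ?thesis by auto
    qed
    ultimately show "z \<in> Hs \<sigma> r" using nz by (simp add: Hs_def)
  qed
  then have "starlike (Hs \<sigma> r)" using a unfolding starlike_def by blast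
  then show ?thesis by (rule starlike_imp_connected)
qed

lemma Hs_mono: "r \<le> r' \<Longrightarrow> Hs \<sigma> r \<subseteq> Hs \<sigma> r'"
  by (auto simp: Hs_def)

lemma Hs_limpt:
  assumes "\<sigma> = 1 \<or> \<sigma> = -1" "r > 0"
  shows "at 0 within Hs \<sigma> r \<noteq> bot"
proof -
  have "Hs \<sigma> r \<inter> ball 0 e - {0} \<noteq> {}" if e: "e > 0" for e
  proof -
    define d where "d = min e r / 2"
    have "of_real \<sigma> * \<i> * of_real d \<in> Hs \<sigma> r \<inter> ball 0 e - {0}"
      using assms e by (auto simp: Hs_def d_def norm_mult)
    then show ?thesis by blast
  qed
  then show ?thesis by (simp add: not_trivial_limit_within_ball)
qed

lemma at_within_Hs:
  assumes "0 < r" "r \<le> r'"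
  shows "at 0 within Hs \<sigma> r' = at 0 within Hs \<sigma> r"
  by (rule at_within_nhd[of _ "ball 0 r"]) (use assms in \<open>auto simp: Hs_def\<close>)

lemma eventually_in_Hs: "eventually (\<lambda>t. t \<in> Hs \<sigma> r) (at 0 within Hs \<sigma> r)"
  by (simp add: eventually_at_filter)

lemma sol_subset: "sol Q V f f1 \<Longrightarrow> W \<subseteq> V \<Longrightarrow> sol Q W f f1"
  by (auto simp: sol_def)

lemma sol_holo:
  assumes "open S" "v holomorphic_on S" "\<And>t. t \<in> S \<Longrightarrow> deriv (deriv v) t = Q t * v t"
  shows "sol Q S v (deriv v)"
  unfolding sol_def
proof
  fix t assume t: "t \<in> S"
  have "(v has_field_derivative deriv v t) (at t)"
    using assms t by (intro holomorphic_derivI) auto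
  moreover have "deriv v holomorphic_on S" using assms by (intro holomorphic_deriv) auto
  then have "(deriv v has_field_derivative deriv (deriv v) t) (at t)"
    using assms t by (intro holomorphic_derivI) auto
  ultimately show "(v has_field_derivative deriv v t) (at t) \<and> (deriv v has_field_derivative Q t * v t) (at t)"
    using assms(3)[OF t] by simp
qed

lemma wronskian_const:
  assumes V: "open V" "connected V" and y: "sol Q V y y1" and z: "sol Q V z z1"
  obtains c where "\<And>t. t \<in> V \<Longrightarrow> y t * z1 t - y1 t * z t = c"
proof -
  have d: "((\<lambda>t. y t * z1 t - y1 t * z t) has_field_derivative 0) (at t)" if t: "t \<in> V" for t
  proof -
    have "((\<lambda>t. y t * z1 t - y1 t * z t) has_field_derivative
        (y1 t * z1 t + y t * (Q t * z t)) - ((Q t * y t) * z t + y1 t * z1 t)) (at t)"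
      using y z t unfolding sol_def by (auto intro!: derivative_eq_intros)
    then show ?thesis by (simp add: algebra_simps)
  qed
  have "continuous_on V (\<lambda>t. y t * z1 t - y1 t * z t)"
    using d by (meson DERIV_isCont continuous_at_imp_continuous_on)
  then obtain c where "\<And>t. t \<in> V \<Longrightarrow> y t * z1 t - y1 t * z t = c"
    using DERIV_zero_connected_constant[OF V(2,1) finite.emptyI] d by blast
  then show ?thesis by (rule that)
qed

lemma decomp:
  assumes V: "open V" "connected V" and f: "sol Q V f g" and f': "sol Q V f' g'"
    and v: "sol Q V v v1" and w: "w \<noteq> 0" and W: "\<And>t. t \<in> V \<Longrightarrow> f t * g' t - g t * f' t = w"
  obtains a b where "\<And>t. t \<in> V \<Longrightarrow> v t = a * f t + b * f' t \<and> v1 t = a * g t + b * g' t"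
proof -
  obtain k1 where k1: "\<And>t. t \<in> V \<Longrightarrow> v t * g' t - v1 t * f' t = k1"
    using wronskian_const[OF V v f'] by blast
  obtain k2 where k2: "\<And>t. t \<in> V \<Longrightarrow> f t * v1 t - g t * v t = k2"
    using wronskian_const[OF V f v] by blast
  show ?thesis
  proof (rule that[of "k1 / w" "k2 / w"])
    fix t assume t: "t \<in> V"
    have r1: "v t = k1 / w * f t + k2 / w * f' t"
    proof -
    have e1: "k1 * f t + k2 * f' t = (v t * g' t - v1 t * f' t) * f t + (f t * v1 t - g t * v t) * f' t"
      by (simp add: k1[OF t] k2[OF t])
    also have "\<dots> = v t * (f t * g' t - g t * f' t)" by (simp add: algebra_simps)
    also have "\<dots> = v t * w" by (simp add: W[OF t])
    finally show ?thesis using w by (simp add: field_simps)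
    qed
    have r2: "v1 t = k1 / w * g t + k2 / w * g' t"
    proof -
    have e2: "k1 * g t + k2 * g' t = (v t * g' t - v1 t * f' t) * g t + (f t * v1 t - g t * v t) * g' t"
      by (simp add: k1[OF t] k2[OF t])
    also have "\<dots> = v1 t * (f t * g' t - g t * f' t)" by (simp add: algebra_simps)
    also have "\<dots> = v1 t * w" by (simp add: W[OF t])
    finally show ?thesis using w by (simp add: field_simps)
    qed
    from r1 r2 show "v t = k1 / w * f t + k2 / w * f' t \<and> v1 t = k1 / w * g t + k2 / w * g' t" ..
  qed
qed

lemma lg_nz: "exp (lg t) = t \<Longrightarrow> t \<noteq> 0"
  by auto

lemma Re_lg: "exp (lg t) = t \<Longrightarrow> Re (lg t) = ln (cmod t)"
proof -
  assume e: "exp (lg t) = t"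
  have "cmod t = exp (Re (lg t))" using e norm_exp_eq_Re by metis
  then show ?thesis by simp
qed

lemma norm_pw: "exp (lg t) = t \<Longrightarrow> cmod (exp (of_real c * lg t)) = cmod t powr c"
proof -
  assume e: "exp (lg t) = t"
  have "cmod (exp (of_real c * lg t)) = exp (c * Re (lg t))" by (simp add: norm_exp_eq_Re)
  also have "\<dots> = exp (c * ln (cmod t))" using Re_lg[of lg t, OF e] by simp
  also have "\<dots> = cmod t powr c" using lg_nz[of lg t, OF e] by (simp add: powr_def)
  finally show ?thesis .
qed

lemma pw_deriv:
  assumes "(lg has_field_derivative 1/t) (at t)"
  shows "((\<lambda>t. exp (of_real c * lg t)) has_field_derivative of_real c * exp (of_real c * lg t) / t) (at t)"
  using assms by (auto intro!: derivative_eq_intros simp: field_simps)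

lemma frob_sol:
  fixes A h h1 h2 lg :: "complex \<Rightarrow> complex" and \<rho> r :: real
  assumes hd: "\<And>t. t \<in> ball 0 r \<Longrightarrow> (h has_field_derivative h1 t) (at t)"
    and h1d: "\<And>t. t \<in> ball 0 r \<Longrightarrow> (h1 has_field_derivative h2 t) (at t)"
    and hid: "\<And>t. t \<in> ball 0 r \<Longrightarrow> t^2 * h2 t + 2 * of_real \<rho> * t * h1 t = (A t - A 0) * h t"
    and A0: "of_real (\<rho> * (\<rho> - 1)) = A 0"
    and V: "V \<subseteq> ball 0 r"
    and lgd: "\<And>t. t \<in> V \<Longrightarrow> (lg has_field_derivative 1/t) (at t)"
    and lge: "\<And>t. t \<in> V \<Longrightarrow> exp (lg t) = t"
  shows "sol (\<lambda>t. A t / t^2) V (\<lambda>t. exp (of_real \<rho> * lg t) * h t)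
           (\<lambda>t. exp (of_real \<rho> * lg t) * (of_real \<rho> * h t / t + h1 t))"
  unfolding sol_def
proof
  fix t assume t: "t \<in> V"
  have tb: "t \<in> ball 0 r" using t V by auto
  have t0: "t \<noteq> 0" using lge[OF t] by auto
  let ?p = "exp (of_real \<rho> * lg t)"
  have d1: "((\<lambda>t. exp (of_real \<rho> * lg t) * h t) has_field_derivative
      (of_real \<rho> * ?p / t) * h t + ?p * h1 t) (at t)"
    by (rule DERIV_cong[OF DERIV_mult[OF pw_deriv[OF lgd[OF t]] hd[OF tb]]]) (simp add: algebra_simps)
  have e1: "(of_real \<rho> * ?p / t) * h t + ?p * h1 t = ?p * (of_real \<rho> * h t / t + h1 t)"
    by (simp add: algebra_simps)
  have di: "((\<lambda>t. of_real \<rho> * h t / t + h1 t) has_field_derivative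
      (of_real \<rho> * h1 t * t - of_real \<rho> * h t * 1) / (t * t) + h2 t) (at t)"
    using t0 by (auto intro!: derivative_eq_intros hd[OF tb] h1d[OF tb])
  have d2: "((\<lambda>t. exp (of_real \<rho> * lg t) * (of_real \<rho> * h t / t + h1 t)) has_field_derivative
      (of_real \<rho> * ?p / t) * (of_real \<rho> * h t / t + h1 t) + ?p * ((of_real \<rho> * h1 t * t - of_real \<rho> * h t * 1) / (t * t) + h2 t)) (at t)"
    by (rule DERIV_cong[OF DERIV_mult[OF pw_deriv[OF lgd[OF t]] di]]) (simp add: algebra_simps)
  have "(of_real \<rho> * ?p / t) * (of_real \<rho> * h t / t + h1 t) + ?p * ((of_real \<rho> * h1 t * t - of_real \<rho> * h t * 1) / (t * t) + h2 t)
      = ?p / t^2 * (of_real (\<rho> * (\<rho> - 1)) * h t + (t^2 * h2 t + 2 * of_real \<rho> * t * h1 t))"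
    using t0 by (simp add: field_simps power2_eq_square)
  also have "\<dots> = A t / t^2 * (?p * h t)"
    unfolding hid[OF tb] A0 by (simp add: algebra_simps)
  finally show "((\<lambda>t. exp (of_real \<rho> * lg t) * h t) has_field_derivative
          exp (of_real \<rho> * lg t) * (of_real \<rho> * h t / t + h1 t)) (at t) \<and>
         ((\<lambda>t. exp (of_real \<rho> * lg t) * (of_real \<rho> * h t / t + h1 t)) has_field_derivative
          A t / t^2 * (exp (of_real \<rho> * lg t) * h t)) (at t)"
    using d1 d2 e1 by simp
qed

lemma lim_isCont: "isCont f a \<Longrightarrow> (f \<longlongrightarrow> f a) (at a within X)"
  by (simp add: continuous_at_imp_continuous_within continuous_within[symmetric])

lemma lim_pw0:
  fixes lg :: "complex \<Rightarrow> complex" and X :: "complex set"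
  assumes c: "c > 0" and lge: "\<And>t. t \<in> X \<Longrightarrow> exp (lg t) = t"
  shows "((\<lambda>t. exp (of_real c * lg t)) \<longlongrightarrow> 0) (at 0 within X)"
proof (rule tendsto_norm_zero_cancel)
  have ev: "eventually (\<lambda>t. cmod t powr c = norm (exp (of_real c * lg t))) (at 0 within X)"
    unfolding eventually_at_filter by (intro always_eventually allI impI) (metis norm_pw lge)
  have "((\<lambda>t. cmod t powr c) \<longlongrightarrow> 0) (at 0 within X)"
    by (rule tendsto_zero_powrI) (auto intro!: tendsto_norm_zero tendsto_ident_at c)
  then show "((\<lambda>t. norm (exp (of_real c * lg t))) \<longlongrightarrow> 0) (at 0 within X)"
    using ev by (rule Lim_transform_eventually)
qed

lemma lim_invlg:
  fixes lg :: "complex \<Rightarrow> complex" and X :: "complex set"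
  assumes lge: "\<And>t. t \<in> X \<Longrightarrow> exp (lg t) = t"
  shows "((\<lambda>t. inverse (lg t)) \<longlongrightarrow> 0) (at 0 within X)"
proof -
  have n0: "filterlim (\<lambda>t. cmod t) (at_right 0) (at 0 within X)"
  proof (rule tendsto_imp_filterlim_at_right)
    show "((\<lambda>t. cmod t) \<longlongrightarrow> 0) (at 0 within X)" by (auto intro!: tendsto_norm_zero tendsto_ident_at)
    show "\<forall>\<^sub>F x in at 0 within X. 0 < cmod x" unfolding eventually_at_filter by auto
  qed
  have "filterlim (\<lambda>t. ln (cmod t)) at_bot (at 0 within X)"
    by (rule filterlim_compose[OF ln_at_0 n0])
  then have "filterlim (\<lambda>t. - ln (cmod t)) at_top (at 0 within X)"
    by (simp add: filterlim_uminus_at_top)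
  moreover have "eventually (\<lambda>t. - ln (cmod t) \<le> norm (lg t)) (at 0 within X)"
    unfolding eventually_at_filter
  proof (intro always_eventually allI impI)
    fix t assume "t \<noteq> 0" "t \<in> X"
    then have "Re (lg t) = ln (cmod t)" using Re_lg[of lg t] lge by auto
    then show "- ln (cmod t) \<le> norm (lg t)" using abs_Re_le_cmod[of "lg t"] by simp
  qed
  ultimately have "filterlim (\<lambda>t. norm (lg t)) at_top (at 0 within X)"
    by (rule filterlim_at_top_mono)
  then have "filterlim lg at_infinity (at 0 within X)"
    by (rule filterlim_norm_at_top_imp_at_infinity)
  then show ?thesis by (rule filterlim_compose[OF tendsto_inverse_0])
qed

lemma pair_to_asym:
  fixes F :: "complex filter"
  assumes V: "open V" "connected V" "X \<subseteq> V" "X \<noteq> {}"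
    and f1: "sol Q V f1 g1" and f2: "sol Q V f2 g2" and w: "w \<noteq> 0"
    and W12: "\<And>t. t \<in> V \<Longrightarrow> f1 t * g2 t - g1 t * f2 t = w"
    and v0: "sol Q V v0 v0'" and v1: "sol Q V v1 v1'"
    and W: "\<And>t. t \<in> X \<Longrightarrow> v0 t * v1' t - v0' t * v1 t \<noteq> 0"
    and FX: "eventually (\<lambda>t. t \<in> X) F"
    and L1: "((\<lambda>t. f1 t / N t) \<longlongrightarrow> 0) F" and L2: "((\<lambda>t. f2 t / N t) \<longlongrightarrow> 1) F"
    and L3: "((\<lambda>t. t * g1 t / N t) \<longlongrightarrow> 0) F" and L4: "((\<lambda>t. t * g2 t / N t) \<longlongrightarrow> \<kappa>) F"
  shows "\<exists>p0 p1. (p0, p1) \<noteq> (0, 0) \<and> ((\<lambda>t. v0 t / N t) \<longlongrightarrow> p0) F \<and> ((\<lambda>t. v1 t / N t) \<longlongrightarrow> p1) F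
     \<and> ((\<lambda>t. t * v0' t / N t) \<longlongrightarrow> \<kappa> * p0) F \<and> ((\<lambda>t. t * v1' t / N t) \<longlongrightarrow> \<kappa> * p1) F"
proof -
  obtain a0 b0 where ab0: "\<And>t. t \<in> V \<Longrightarrow> v0 t = a0 * f1 t + b0 * f2 t \<and> v0' t = a0 * g1 t + b0 * g2 t"
    using decomp[OF V(1,2) f1 f2 v0 w W12] by blast
  obtain a1 b1 where ab1: "\<And>t. t \<in> V \<Longrightarrow> v1 t = a1 * f1 t + b1 * f2 t \<and> v1' t = a1 * g1 t + b1 * g2 t"
    using decomp[OF V(1,2) f1 f2 v1 w W12] by blast
  have nz: "(b0, b1) \<noteq> (0, 0)"
  proof
    assume "(b0, b1) = (0, 0)"
    then have b: "b0 = 0" "b1 = 0" by auto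
    from V(4) obtain t where t: "t \<in> X" by auto
    then have tV: "t \<in> V" using V(3) by auto
    have "v0 t * v1' t - v0' t * v1 t = 0"
      using ab0[OF tV] ab1[OF tV] b by (simp add: algebra_simps)
    then show False using W[OF t] by simp
  qed
  have lim: "((\<lambda>t. v t / N t) \<longlongrightarrow> b) F \<and> ((\<lambda>t. t * v' t / N t) \<longlongrightarrow> \<kappa> * b) F"
    if ab: "\<And>t. t \<in> V \<Longrightarrow> v t = a * f1 t + b * f2 t \<and> v' t = a * g1 t + b * g2 t" for v v' a b
  proof
    have "((\<lambda>t. a * (f1 t / N t) + b * (f2 t / N t)) \<longlongrightarrow> a * 0 + b * 1) F"
      by (intro tendsto_intros L1 L2)
    moreover have "eventually (\<lambda>t. a * (f1 t / N t) + b * (f2 t / N t) = v t / N t) F"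
      using FX proof eventually_elim
      case (elim t) then have "t \<in> V" using V(3) by auto
      then show ?case using ab[of t] by (simp add: add_divide_distrib)
    qed
    ultimately show "((\<lambda>t. v t / N t) \<longlongrightarrow> b) F" by (simp add: Lim_transform_eventually)
    have "((\<lambda>t. a * (t * g1 t / N t) + b * (t * g2 t / N t)) \<longlongrightarrow> a * 0 + b * \<kappa>) F"
      by (intro tendsto_intros L3 L4)
    moreover have "eventually (\<lambda>t. a * (t * g1 t / N t) + b * (t * g2 t / N t) = t * v' t / N t) F"
      using FX proof eventually_elim
      case (elim t) then have "t \<in> V" using V(3) by auto
      then show ?case using ab[of t] by (simp add: add_divide_distrib distrib_left mult.left_commute)
    qed
    ultimately show "((\<lambda>t. t * v' t / N t) \<longlongrightarrow> \<kappa> * b) F" by (simp add: Lim_transform_eventually mult.commute)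
  qed
  show ?thesis using nz lim[OF ab0] lim[OF ab1] by blast
qed

lemma mkV:
  assumes "open S'" "Hs \<sigma> r \<subseteq> S'" "\<sigma> = 1 \<or> \<sigma> = -1" "r > 0"
  obtains V where "open V" "connected V" "Hs \<sigma> r \<subseteq> V" "V \<subseteq> S'"
proof -
  define a where "a = of_real \<sigma> * \<i> * of_real (r/2)"
  have a: "a \<in> Hs \<sigma> r" using assms by (auto simp: Hs_def a_def norm_mult)
  show ?thesis
  proof (rule that[of "connected_component_set S' a"])
    show "open (connected_component_set S' a)" using assms(1) by (rule open_connected_component)
    show "connected (connected_component_set S' a)" by (rule connected_connected_component)
    show "Hs \<sigma> r \<subseteq> connected_component_set S' a"
      by (rule connected_component_maximal[OF a Hs_connected[OF assms(3,4)] assms(2)])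
    show "connected_component_set S' a \<subseteq> S'" by (rule connected_component_subset)
  qed
qed


lemma case_nonzero:
  fixes A lg :: "complex \<Rightarrow> complex" and \<mu> \<sigma> :: real and \<Omega> S :: "complex set"
  assumes holA: "A holomorphic_on ball 0 1" and A0: "A 0 = - of_real ((1 - \<mu>^2)/4)"
    and mu: "\<bar>\<mu>\<bar> < 1" "\<mu> \<noteq> 0" and sig: "\<sigma> = 1 \<or> \<sigma> = -1"
    and Om: "open \<Omega>" "Hs \<sigma> 1 \<subseteq> \<Omega>"
    and lgd: "\<And>t. t \<in> \<Omega> \<Longrightarrow> (lg has_field_derivative 1/t) (at t)"
    and lge: "\<And>t. t \<in> \<Omega> \<Longrightarrow> exp (lg t) = t"
    and S: "open S" "Hs \<sigma> 1 \<subseteq> S"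
  obtains r V f1 g1 f2 g2 w N where "0 < r" "r \<le> 1" "open V" "connected V" "Hs \<sigma> r \<subseteq> V" "V \<subseteq> S"
    "sol (\<lambda>t. A t / t^2) V f1 g1" "sol (\<lambda>t. A t / t^2) V f2 g2" "w \<noteq> 0"
    "\<And>t. t \<in> V \<Longrightarrow> f1 t * g2 t - g1 t * f2 t = w"
    "((\<lambda>t. f1 t / N t) \<longlongrightarrow> 0) (at 0 within Hs \<sigma> r)"
    "((\<lambda>t. f2 t / N t) \<longlongrightarrow> 1) (at 0 within Hs \<sigma> r)"
    "((\<lambda>t. t * g1 t / N t) \<longlongrightarrow> 0) (at 0 within Hs \<sigma> r)"
    "((\<lambda>t. t * g2 t / N t) \<longlongrightarrow> of_real ((1 - \<bar>\<mu>\<bar>)/2)) (at 0 within Hs \<sigma> r)"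
proof -
  define rp where "rp = (1 + \<bar>\<mu>\<bar>)/2"
  define rm where "rm = (1 - \<bar>\<mu>\<bar>)/2"
  have rpm: "rp > 0" "rm > 0" "rp + rm = 1" "rp - rm = \<bar>\<mu>\<bar>" using mu by (auto simp: rp_def rm_def field_simps)
  have Ap: "of_real (rp * (rp - 1)) = A 0"
  proof -
    have "rp * (rp - 1) = - ((1 - \<mu>^2)/4)" by (simp add: rp_def field_simps power2_eq_square)
    then show ?thesis by (simp add: A0)
  qed
  have Am: "of_real (rm * (rm - 1)) = A 0"
  proof -
    have "rm * (rm - 1) = - ((1 - \<mu>^2)/4)" by (simp add: rm_def field_simps power2_eq_square)
    then show ?thesis by (simp add: A0)
  qed
  obtain r1 hp hp1 hp2 where fp: "0 < r1" "r1 \<le> 1" "hp 0 = 1"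
    "\<And>t. t \<in> ball 0 r1 \<Longrightarrow> (hp has_field_derivative hp1 t) (at t)"
    "\<And>t. t \<in> ball 0 r1 \<Longrightarrow> (hp1 has_field_derivative hp2 t) (at t)"
    "\<And>t. t \<in> ball 0 r1 \<Longrightarrow> t^2 * hp2 t + 2 * of_real rp * t * hp1 t = (A t - A 0) * hp t"
    using frobenius[OF holA zero_less_one rpm(1)] by blast
  obtain r2 hm hm1 hm2 where fm: "0 < r2" "r2 \<le> 1" "hm 0 = 1"
    "\<And>t. t \<in> ball 0 r2 \<Longrightarrow> (hm has_field_derivative hm1 t) (at t)"
    "\<And>t. t \<in> ball 0 r2 \<Longrightarrow> (hm1 has_field_derivative hm2 t) (at t)"
    "\<And>t. t \<in> ball 0 r2 \<Longrightarrow> t^2 * hm2 t + 2 * of_real rm * t * hm1 t = (A t - A 0) * hm t"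
    using frobenius[OF holA zero_less_one rpm(2)] by blast
  define r where "r = min r1 r2"
  have r: "0 < r" "r \<le> 1" "r \<le> r1" "r \<le> r2" using fp(1,2) fm(1,2) by (auto simp: r_def)
  have HS: "Hs \<sigma> r \<subseteq> S \<inter> \<Omega> \<inter> ball 0 r"
  proof -
    have "Hs \<sigma> r \<subseteq> Hs \<sigma> 1" by (rule Hs_mono[OF r(2)])
    moreover have "Hs \<sigma> r \<subseteq> ball 0 r" by (auto simp: Hs_def)
    ultimately show ?thesis using S(2) Om(2) by blast
  qed
  have oS: "open (S \<inter> \<Omega> \<inter> ball 0 r)" by (intro open_Int S(1) Om(1) open_ball)
  obtain V where V: "open V" "connected V" "Hs \<sigma> r \<subseteq> V" "V \<subseteq> S \<inter> \<Omega> \<inter> ball 0 r"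
    by (rule mkV[OF oS HS sig r(1)])
  have V1: "V \<subseteq> ball 0 r1" "V \<subseteq> ball 0 r2" using V(4) r(3,4) by auto
  have lgdV: "\<And>t. t \<in> V \<Longrightarrow> (lg has_field_derivative 1/t) (at t)" and lgeV: "\<And>t. t \<in> V \<Longrightarrow> exp (lg t) = t"
    using V(4) lgd lge by auto
  define P where "P = (\<lambda>c t. exp (of_real c * lg t))"
  define f1 where "f1 = (\<lambda>t. P rp t * hp t)"
  define g1 where "g1 = (\<lambda>t. P rp t * (of_real rp * hp t / t + hp1 t))"
  define f2 where "f2 = (\<lambda>t. P rm t * hm t)"
  define g2 where "g2 = (\<lambda>t. P rm t * (of_real rm * hm t / t + hm1 t))"
  have s1: "sol (\<lambda>t. A t / t^2) V f1 g1"
    unfolding f1_def g1_def P_def by (rule frob_sol[OF fp(4,5,6) Ap V1(1) lgdV lgeV])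
  have s2: "sol (\<lambda>t. A t / t^2) V f2 g2"
    unfolding f2_def g2_def P_def by (rule frob_sol[OF fm(4,5,6) Am V1(2) lgdV lgeV])
  define E where "E = (\<lambda>t. of_real (rm - rp) * hp t * hm t + t * (hp t * hm1 t - hp1 t * hm t))"
  have WE: "f1 t * g2 t - g1 t * f2 t = E t" if t: "t \<in> V" for t
  proof -
    have t0: "t \<noteq> 0" using lgeV[OF t] by auto
    have PP: "P rp t * P rm t = t"
    proof -
      have "P rp t * P rm t = exp ((of_real rp + of_real rm) * lg t)"
        by (simp add: P_def exp_add[symmetric] algebra_simps)
      also have "of_real rp + of_real rm = (1::complex)" using rpm(3) by (metis of_real_1 of_real_add)
      finally show ?thesis using lgeV[OF t] by simp
    qed
    have "f1 t * g2 t - g1 t * f2 t = (P rp t * P rm t) * ((of_real rm - of_real rp) * hp t * hm t / t + (hp t * hm1 t - hp1 t * hm t))"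
      by (simp add: f1_def g1_def f2_def g2_def algebra_simps add_divide_distrib diff_divide_distrib)
    also have "\<dots> = E t" using t0 unfolding PP E_def by (simp add: field_simps)
    finally show ?thesis .
  qed
  obtain c where c: "\<And>t. t \<in> V \<Longrightarrow> f1 t * g2 t - g1 t * f2 t = c"
    using wronskian_const[OF V(1,2) s1 s2] by blast
  have b0: "(0::complex) \<in> ball 0 r1" "(0::complex) \<in> ball 0 r2" using fp(1) fm(1) by auto
  have cont: "isCont hp 0" "isCont hm 0" "isCont hp1 0" "isCont hm1 0"
    by (rule DERIV_isCont[OF fp(4)[OF b0(1)]] DERIV_isCont[OF fm(4)[OF b0(2)]]
          DERIV_isCont[OF fp(5)[OF b0(1)]] DERIV_isCont[OF fm(5)[OF b0(2)]])+
  have FH: "eventually (\<lambda>t. t \<in> Hs \<sigma> r) (at 0 within Hs \<sigma> r)" by (rule eventually_in_Hs)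
  have bot: "at 0 within Hs \<sigma> r \<noteq> bot" by (rule Hs_limpt[OF sig r(1)])
  have "(E \<longlongrightarrow> E 0) (at 0 within Hs \<sigma> r)"
    unfolding E_def by (intro tendsto_intros lim_isCont cont)
  moreover have "eventually (\<lambda>t. E t = c) (at 0 within Hs \<sigma> r)"
    using FH by eventually_elim (use V(3) c WE in auto)
  ultimately have "((\<lambda>t. c) \<longlongrightarrow> E 0) (at 0 within Hs \<sigma> r)"
    by (rule Lim_transform_eventually)
  then have cE: "c = E 0" using bot tendsto_const tendsto_unique by blast
  have c0: "c \<noteq> 0" using cE rpm fp(3) fm(3) mu by (simp add: E_def)
  have FHe: "eventually (\<lambda>t. t \<in> V \<and> t \<noteq> 0) (at 0 within Hs \<sigma> r)"
    using FH by eventually_elim (use V(3) in \<open>auto simp: Hs_def\<close>)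
  have lgH: "\<And>t. t \<in> Hs \<sigma> r \<Longrightarrow> exp (lg t) = t" using V(3) lgeV by auto
  have D0: "((\<lambda>t. P (rp - rm) t) \<longlongrightarrow> 0) (at 0 within Hs \<sigma> r)"
    unfolding P_def using lim_pw0[of "rp - rm" "Hs \<sigma> r" lg] rpm mu lgH by simp
  have Pq: "P rp t / P rm t = P (rp - rm) t" for t
    by (simp add: P_def exp_diff[symmetric] algebra_simps)
  have Pnz: "P c t \<noteq> 0" for c t by (simp add: P_def)
  show ?thesis
  proof (rule that[OF r(1,2) V(1,2,3) _ s1 s2 c0 c, of "P rm"])
    show "V \<subseteq> S" using V(4) by auto
    have "((\<lambda>t. P (rp - rm) t * hp t) \<longlongrightarrow> 0 * hp 0) (at 0 within Hs \<sigma> r)"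
      by (intro tendsto_intros D0 lim_isCont cont)
    moreover have "eventually (\<lambda>t. P (rp - rm) t * hp t = f1 t / P rm t) (at 0 within Hs \<sigma> r)"
      using FHe by eventually_elim (simp add: f1_def Pq[symmetric])
    ultimately show "((\<lambda>t. f1 t / P rm t) \<longlongrightarrow> 0) (at 0 within Hs \<sigma> r)"
      by (simp add: Lim_transform_eventually)
    have "(hm \<longlongrightarrow> hm 0) (at 0 within Hs \<sigma> r)" by (intro lim_isCont cont)
    moreover have "eventually (\<lambda>t. hm t = f2 t / P rm t) (at 0 within Hs \<sigma> r)"
      using FHe by eventually_elim (simp add: f2_def Pnz)
    ultimately show "((\<lambda>t. f2 t / P rm t) \<longlongrightarrow> 1) (at 0 within Hs \<sigma> r)"
      using fm(3) by (simp add: Lim_transform_eventually)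
    have "((\<lambda>t. P (rp - rm) t * (of_real rp * hp t + t * hp1 t)) \<longlongrightarrow> 0 * (of_real rp * hp 0 + 0 * hp1 0)) (at 0 within Hs \<sigma> r)"
      by (intro tendsto_intros D0 lim_isCont cont tendsto_ident_at)
    moreover have "eventually (\<lambda>t. P (rp - rm) t * (of_real rp * hp t + t * hp1 t) = t * g1 t / P rm t) (at 0 within Hs \<sigma> r)"
      using FHe by eventually_elim (simp add: g1_def Pq[symmetric] field_simps Pnz)
    ultimately show "((\<lambda>t. t * g1 t / P rm t) \<longlongrightarrow> 0) (at 0 within Hs \<sigma> r)"
      by (simp add: Lim_transform_eventually)
    have "((\<lambda>t. of_real rm * hm t + t * hm1 t) \<longlongrightarrow> of_real rm * hm 0 + 0 * hm1 0) (at 0 within Hs \<sigma> r)"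
      by (intro tendsto_intros lim_isCont cont tendsto_ident_at)
    moreover have "eventually (\<lambda>t. of_real rm * hm t + t * hm1 t = t * g2 t / P rm t) (at 0 within Hs \<sigma> r)"
      using FHe by eventually_elim (simp add: g2_def field_simps Pnz)
    ultimately show "((\<lambda>t. t * g2 t / P rm t) \<longlongrightarrow> of_real ((1 - \<bar>\<mu>\<bar>)/2)) (at 0 within Hs \<sigma> r)"
      using fm(3) by (simp add: Lim_transform_eventually rm_def)
  qed
qed

lemma case_zero:
  fixes A lg :: "complex \<Rightarrow> complex" and \<mu> \<sigma> :: real and \<Omega> S :: "complex set"
  assumes holA: "A holomorphic_on ball 0 1" and A0: "A 0 = - of_real ((1 - \<mu>^2)/4)"
    and mu: "\<mu> = 0" and sig: "\<sigma> = 1 \<or> \<sigma> = -1"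
    and Om: "open \<Omega>" "Hs \<sigma> 1 \<subseteq> \<Omega>"
    and lgd: "\<And>t. t \<in> \<Omega> \<Longrightarrow> (lg has_field_derivative 1/t) (at t)"
    and lge: "\<And>t. t \<in> \<Omega> \<Longrightarrow> exp (lg t) = t"
    and S: "open S" "Hs \<sigma> 1 \<subseteq> S"
  obtains r V f1 g1 f2 g2 w N where "0 < r" "r \<le> 1" "open V" "connected V" "Hs \<sigma> r \<subseteq> V" "V \<subseteq> S"
    "sol (\<lambda>t. A t / t^2) V f1 g1" "sol (\<lambda>t. A t / t^2) V f2 g2" "w \<noteq> 0"
    "\<And>t. t \<in> V \<Longrightarrow> f1 t * g2 t - g1 t * f2 t = w"
    "((\<lambda>t. f1 t / N t) \<longlongrightarrow> 0) (at 0 within Hs \<sigma> r)"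
    "((\<lambda>t. f2 t / N t) \<longlongrightarrow> 1) (at 0 within Hs \<sigma> r)"
    "((\<lambda>t. t * g1 t / N t) \<longlongrightarrow> 0) (at 0 within Hs \<sigma> r)"
    "((\<lambda>t. t * g2 t / N t) \<longlongrightarrow> of_real ((1 - \<bar>\<mu>\<bar>)/2)) (at 0 within Hs \<sigma> r)"
proof -
  define rh :: real where "rh = 1/2"
  have rh0: "rh > 0" by (simp add: rh_def)
  have Ah: "of_real (rh * (rh - 1)) = A 0" using A0 mu by (simp add: rh_def)
  obtain r1 h h1 h2 where fp: "0 < r1" "r1 \<le> 1" "h 0 = 1"
    "\<And>t. t \<in> ball 0 r1 \<Longrightarrow> (h has_field_derivative h1 t) (at t)"
    "\<And>t. t \<in> ball 0 r1 \<Longrightarrow> (h1 has_field_derivative h2 t) (at t)"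
    "\<And>t. t \<in> ball 0 r1 \<Longrightarrow> t^2 * h2 t + 2 * of_real rh * t * h1 t = (A t - A 0) * h t"
    using frobenius[OF holA zero_less_one rh0] by blast
  have holh: "h holomorphic_on ball 0 r1"
    unfolding holomorphic_on_open[OF open_ball] using fp(4) by blast
  have "open (ball 0 r1 \<inter> h -` (-{0}))"
    by (rule continuous_open_preimage[OF holomorphic_on_imp_continuous_on[OF holh]]) auto
  moreover have "0 \<in> ball 0 r1 \<inter> h -` (-{0})" using fp(1,3) by auto
  ultimately obtain d where d: "d > 0" "ball 0 d \<subseteq> ball 0 r1 \<inter> h -` (-{0})"
    by (meson open_contains_ball)
  define r where "r = min d r1"
  have r: "0 < r" "r \<le> 1" "r \<le> r1" using d fp(1,2) by (auto simp: r_def)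
  have hnz: "h t \<noteq> 0" if "t \<in> ball 0 r" for t using that d(2) by (auto simp: r_def)
  have holhr: "h holomorphic_on ball 0 r" by (rule holomorphic_on_subset[OF holh]) (use r(3) in auto)
  define kf where "kf = (\<lambda>t. inverse (h t ^ 2))"
  have holk: "kf holomorphic_on ball 0 r"
    unfolding kf_def using hnz by (intro holomorphic_intros holhr) auto
  define m where "m = (\<lambda>z. if z = 0 then deriv kf 0 else (kf z - kf 0) / (z - 0))"
  have holm: "m holomorphic_on ball 0 r"
    unfolding m_def by (rule pole_lemma_open[OF holk open_ball])
  obtain Pr where Pr0: "\<And>x. x \<in> ball 0 r \<Longrightarrow> (Pr has_field_derivative m x) (at x within ball 0 r)"
    using holomorphic_convex_primitive'[OF convex_ball open_ball holm] by blast
  have Pr: "(Pr has_field_derivative m x) (at x)" if "x \<in> ball 0 r" for x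
    using Pr0[OF that] at_within_open[OF that open_ball] by simp
  have HS: "Hs \<sigma> r \<subseteq> S \<inter> \<Omega> \<inter> ball 0 r"
  proof -
    have "Hs \<sigma> r \<subseteq> Hs \<sigma> 1" by (rule Hs_mono[OF r(2)])
    moreover have "Hs \<sigma> r \<subseteq> ball 0 r" by (auto simp: Hs_def)
    ultimately show ?thesis using S(2) Om(2) by blast
  qed
  have oS: "open (S \<inter> \<Omega> \<inter> ball 0 r)" by (intro open_Int S(1) Om(1) open_ball)
  obtain V where V: "open V" "connected V" "Hs \<sigma> r \<subseteq> V" "V \<subseteq> S \<inter> \<Omega> \<inter> ball 0 r"
    by (rule mkV[OF oS HS sig r(1)])
  have V1: "V \<subseteq> ball 0 r1" using V(4) r(3) by auto
  have Vr: "V \<subseteq> ball 0 r" using V(4) by auto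
  have lgdV: "\<And>t. t \<in> V \<Longrightarrow> (lg has_field_derivative 1/t) (at t)" and lgeV: "\<And>t. t \<in> V \<Longrightarrow> exp (lg t) = t"
    using V(4) lgd lge by auto
  define Ph where "Ph = (\<lambda>t. exp (of_real rh * lg t))"
  define f1 where "f1 = (\<lambda>t. Ph t * h t)"
  define g1 where "g1 = (\<lambda>t. Ph t * (of_real rh * h t / t + h1 t))"
  have s1: "sol (\<lambda>t. A t / t^2) V f1 g1"
    unfolding f1_def g1_def Ph_def by (rule frob_sol[OF fp(4,5,6) Ah V1 lgdV lgeV])
  define G where "G = (\<lambda>t. lg t + Pr t)"
  define f2 where "f2 = (\<lambda>t. f1 t * G t)"
  define g2 where "g2 = (\<lambda>t. g1 t * G t + inverse (f1 t))"
  have facts: "t \<noteq> 0" "Ph t \<noteq> 0" "Ph t * Ph t = t" "h t \<noteq> 0" "f1 t \<noteq> 0"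
     "(G has_field_derivative inverse (f1 t * f1 t)) (at t)" if t: "t \<in> V" for t
  proof -
    show t0: "t \<noteq> 0" using lgeV[OF t] by auto
    show Pn: "Ph t \<noteq> 0" by (simp add: Ph_def)
    show PP: "Ph t * Ph t = t"
    proof -
      have "Ph t * Ph t = exp ((of_real rh + of_real rh) * lg t)"
        by (simp add: Ph_def exp_add[symmetric] algebra_simps)
      also have "of_real rh + of_real rh = (1::complex)" by (simp add: rh_def)
      finally show ?thesis using lgeV[OF t] by simp
    qed
    have tr: "t \<in> ball 0 r" using t Vr by auto
    show hn: "h t \<noteq> 0" using hnz[OF tr] .
    show "f1 t \<noteq> 0" using Pn hn by (simp add: f1_def)
    have k0: "kf 0 = 1" using fp(3) by (simp add: kf_def)
    have "(G has_field_derivative 1/t + m t) (at t)"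
      unfolding G_def by (rule DERIV_add[OF lgdV[OF t] Pr[OF tr]])
    moreover have "1/t + m t = inverse (f1 t * f1 t)"
    proof -
      have "m t = (inverse (h t ^ 2) - 1) / t" using t0 k0 by (simp add: m_def kf_def)
      then have "1/t + m t = inverse (h t ^ 2) / t" using t0 by (simp add: field_simps)
      also have "\<dots> = inverse (f1 t * f1 t)"
      proof -
        have "f1 t * f1 t = t * h t ^ 2" using PP by (simp add: f1_def power2_eq_square algebra_simps)
        then show ?thesis by (simp add: field_simps)
      qed
      finally show ?thesis .
    qed
    ultimately show "(G has_field_derivative inverse (f1 t * f1 t)) (at t)" by simp
  qed
  have s2: "sol (\<lambda>t. A t / t^2) V f2 g2"
    unfolding sol_def
  proof
    fix t assume t: "t \<in> V"
    note ft = facts[OF t]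
    have d1: "(f1 has_field_derivative g1 t) (at t)" and d2: "(g1 has_field_derivative A t / t^2 * f1 t) (at t)"
      using s1 t by (auto simp: sol_def)
    have e: "g1 t * G t + f1 t * inverse (f1 t * f1 t) = g2 t"
      using ft(5) by (simp add: g2_def field_simps)
    have D1: "(f2 has_field_derivative g2 t) (at t)"
      unfolding f2_def by (rule DERIV_cong[OF DERIV_mult[OF d1 ft(6)]]) (simp add: e[symmetric] algebra_simps)
    have "(g2 has_field_derivative (A t / t^2 * f1 t) * G t + g1 t * inverse (f1 t * f1 t) + - (g1 t * inverse (f1 t ^ 2))) (at t)"
    proof -
      have a: "((\<lambda>t. g1 t * G t) has_field_derivative (A t / t^2 * f1 t) * G t + g1 t * inverse (f1 t * f1 t)) (at t)"
        by (rule DERIV_cong[OF DERIV_mult[OF d2 ft(6)]]) (simp add: algebra_simps)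
      have b: "((\<lambda>t. inverse (f1 t)) has_field_derivative - (g1 t * inverse (f1 t ^ 2))) (at t)"
        using DERIV_inverse_fun[OF d1 ft(5)] by (simp add: numeral_2_eq_2)
      show ?thesis unfolding g2_def by (rule DERIV_add[OF a b])
    qed
    moreover have "(A t / t^2 * f1 t) * G t + g1 t * inverse (f1 t * f1 t) + - (g1 t * inverse (f1 t ^ 2)) = A t / t^2 * f2 t"
      by (simp add: f2_def power2_eq_square)
    ultimately show "(f2 has_field_derivative g2 t) (at t) \<and> (g2 has_field_derivative A t / t^2 * f2 t) (at t)"
      using D1 by simp
  qed
  have W12: "f1 t * g2 t - g1 t * f2 t = 1" if t: "t \<in> V" for t
    using facts(5)[OF t] by (simp add: f2_def g2_def field_simps)
  have b0: "(0::complex) \<in> ball 0 r1" "(0::complex) \<in> ball 0 r" using fp(1) r(1) by auto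
  have cont: "isCont h 0" "isCont h1 0" "isCont Pr 0"
    by (rule DERIV_isCont[OF fp(4)[OF b0(1)]] DERIV_isCont[OF fp(5)[OF b0(1)]] DERIV_isCont[OF Pr[OF b0(2)]])+
  have FH: "eventually (\<lambda>t. t \<in> Hs \<sigma> r) (at 0 within Hs \<sigma> r)" by (rule eventually_in_Hs)
  have FHe: "eventually (\<lambda>t. t \<in> V \<and> lg t \<noteq> 0) (at 0 within Hs \<sigma> r)"
    using FH
  proof eventually_elim
    case (elim t)
    then have tV: "t \<in> V" using V(3) by auto
    have "lg t \<noteq> 0"
    proof
      assume "lg t = 0"
      then have "t = 1" using lgeV[OF tV] by simp
      then show False using elim r(2) by (simp add: Hs_def)
    qed
    then show ?case using tV by simp
  qed
  have lgH: "\<And>t. t \<in> Hs \<sigma> r \<Longrightarrow> exp (lg t) = t" using V(3) lgeV by auto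
  have IL: "((\<lambda>t. inverse (lg t)) \<longlongrightarrow> 0) (at 0 within Hs \<sigma> r)"
    by (rule lim_invlg[OF lgH])
  show ?thesis
  proof (rule that[OF r(1,2) V(1,2,3) _ s1 s2 one_neq_zero W12, of "\<lambda>t. Ph t * lg t"])
    show "V \<subseteq> S" using V(4) by auto
    have "((\<lambda>t. h t * inverse (lg t)) \<longlongrightarrow> h 0 * 0) (at 0 within Hs \<sigma> r)"
      by (intro tendsto_intros IL lim_isCont cont)
    moreover have "eventually (\<lambda>t. h t * inverse (lg t) = f1 t / (Ph t * lg t)) (at 0 within Hs \<sigma> r)"
      using FHe by eventually_elim (simp add: f1_def facts field_simps)
    ultimately show "((\<lambda>t. f1 t / (Ph t * lg t)) \<longlongrightarrow> 0) (at 0 within Hs \<sigma> r)"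
      by (simp add: Lim_transform_eventually)
    have "((\<lambda>t. h t * (1 + Pr t * inverse (lg t))) \<longlongrightarrow> h 0 * (1 + Pr 0 * 0)) (at 0 within Hs \<sigma> r)"
      by (intro tendsto_intros IL lim_isCont cont)
    moreover have "eventually (\<lambda>t. h t * (1 + Pr t * inverse (lg t)) = f2 t / (Ph t * lg t)) (at 0 within Hs \<sigma> r)"
      using FHe by eventually_elim (simp add: f1_def f2_def G_def facts field_simps)
    ultimately show "((\<lambda>t. f2 t / (Ph t * lg t)) \<longlongrightarrow> 1) (at 0 within Hs \<sigma> r)"
      using fp(3) by (simp add: Lim_transform_eventually)
    have "((\<lambda>t. (of_real rh * h t + t * h1 t) * inverse (lg t)) \<longlongrightarrow> (of_real rh * h 0 + 0 * h1 0) * 0) (at 0 within Hs \<sigma> r)"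
      by (intro tendsto_intros IL lim_isCont cont tendsto_ident_at)
    moreover have "eventually (\<lambda>t. (of_real rh * h t + t * h1 t) * inverse (lg t) = t * g1 t / (Ph t * lg t)) (at 0 within Hs \<sigma> r)"
      using FHe by eventually_elim (simp add: g1_def facts field_simps)
    ultimately show "((\<lambda>t. t * g1 t / (Ph t * lg t)) \<longlongrightarrow> 0) (at 0 within Hs \<sigma> r)"
      by (simp add: Lim_transform_eventually)
    have "((\<lambda>t. (of_real rh * h t + t * h1 t) * (1 + Pr t * inverse (lg t)) + inverse (h t) * inverse (lg t))
        \<longlongrightarrow> (of_real rh * h 0 + 0 * h1 0) * (1 + Pr 0 * 0) + inverse (h 0) * 0) (at 0 within Hs \<sigma> r)"
      by (intro tendsto_intros IL lim_isCont cont tendsto_ident_at) (simp add: fp(3))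
    moreover have "eventually (\<lambda>t. (of_real rh * h t + t * h1 t) * (1 + Pr t * inverse (lg t)) + inverse (h t) * inverse (lg t)
         = t * g2 t / (Ph t * lg t)) (at 0 within Hs \<sigma> r)"
      using FHe
    proof eventually_elim
      case (elim t)
      note ft = facts[OF conjunct1[OF elim]]
      have "t * g2 t / (Ph t * lg t) = (t * g1 t * G t + t * inverse (f1 t)) / (Ph t * lg t)"
        by (simp add: g2_def algebra_simps)
      also have "t * inverse (f1 t) = Ph t * inverse (h t)"
        using ft by (simp add: f1_def field_simps)
      also have "(t * g1 t * G t + Ph t * inverse (h t)) / (Ph t * lg t)
          = (of_real rh * h t + t * h1 t) * (1 + Pr t * inverse (lg t)) + inverse (h t) * inverse (lg t)"
        using ft elim by (simp add: g1_def G_def field_simps)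
      finally show ?case by simp
    qed
    ultimately show "((\<lambda>t. t * g2 t / (Ph t * lg t)) \<longlongrightarrow> of_real ((1 - \<bar>\<mu>\<bar>)/2)) (at 0 within Hs \<sigma> r)"
      using fp(3) mu by (simp add: Lim_transform_eventually rh_def)
  qed
qed

lemma local_from_pair:
  fixes Q v0 v1 v0' v1' :: "complex \<Rightarrow> complex" and \<sigma> r :: real and \<kappa> :: complex
  assumes sig: "\<sigma> = 1 \<or> \<sigma> = -1" and r: "0 < r" "r \<le> 1" and V: "open V" "connected V" "Hs \<sigma> r \<subseteq> V" "V \<subseteq> S"
    and f1: "sol Q V f1 g1" and f2: "sol Q V f2 g2" and w: "w \<noteq> 0"
    and W12: "\<And>t. t \<in> V \<Longrightarrow> f1 t * g2 t - g1 t * f2 t = w"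
    and L1: "((\<lambda>t. f1 t / N t) \<longlongrightarrow> 0) (at 0 within Hs \<sigma> r)"
    and L2: "((\<lambda>t. f2 t / N t) \<longlongrightarrow> 1) (at 0 within Hs \<sigma> r)"
    and L3: "((\<lambda>t. t * g1 t / N t) \<longlongrightarrow> 0) (at 0 within Hs \<sigma> r)"
    and L4: "((\<lambda>t. t * g2 t / N t) \<longlongrightarrow> \<kappa>) (at 0 within Hs \<sigma> r)"
    and s0: "sol Q S v0 v0'" and s1: "sol Q S v1 v1'"
    and W: "\<And>t. t \<in> Hs \<sigma> 1 \<Longrightarrow> v0 t * v1' t - v0' t * v1 t \<noteq> 0"
  shows "\<exists>p0 p1 N. (p0, p1) \<noteq> (0, 0) \<and> ((\<lambda>t. v0 t / N t) \<longlongrightarrow> p0) (at 0 within Hs \<sigma> 1)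
     \<and> ((\<lambda>t. v1 t / N t) \<longlongrightarrow> p1) (at 0 within Hs \<sigma> 1)
     \<and> ((\<lambda>t. t * v0' t / N t) \<longlongrightarrow> \<kappa> * p0) (at 0 within Hs \<sigma> 1)
     \<and> ((\<lambda>t. t * v1' t / N t) \<longlongrightarrow> \<kappa> * p1) (at 0 within Hs \<sigma> 1)"
proof -
  have ne: "Hs \<sigma> r \<noteq> {}" using Hs_limpt[OF sig r(1)] by auto
  have W': "\<And>t. t \<in> Hs \<sigma> r \<Longrightarrow> v0 t * v1' t - v0' t * v1 t \<noteq> 0"
    using W Hs_mono[OF r(2), of \<sigma>] by auto
  have "\<exists>p0 p1. (p0, p1) \<noteq> (0, 0) \<and> ((\<lambda>t. v0 t / N t) \<longlongrightarrow> p0) (at 0 within Hs \<sigma> r)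
     \<and> ((\<lambda>t. v1 t / N t) \<longlongrightarrow> p1) (at 0 within Hs \<sigma> r)
     \<and> ((\<lambda>t. t * v0' t / N t) \<longlongrightarrow> \<kappa> * p0) (at 0 within Hs \<sigma> r)
     \<and> ((\<lambda>t. t * v1' t / N t) \<longlongrightarrow> \<kappa> * p1) (at 0 within Hs \<sigma> r)"
    by (rule pair_to_asym[OF V(1,2,3) ne f1 f2 w W12 sol_subset[OF s0 V(4)] sol_subset[OF s1 V(4)] W'
          eventually_in_Hs L1 L2 L3 L4])
  then show ?thesis unfolding at_within_Hs[OF r] by blast
qed

lemma local_main:
  fixes A lg v0 v1 v0' v1' :: "complex \<Rightarrow> complex" and \<mu> \<sigma> :: real and \<Omega> S :: "complex set"
  assumes holA: "A holomorphic_on ball 0 1" and A0: "A 0 = - of_real ((1 - \<mu>^2)/4)"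
    and mu: "\<bar>\<mu>\<bar> < 1" and sig: "\<sigma> = 1 \<or> \<sigma> = -1"
    and Om: "open \<Omega>" "Hs \<sigma> 1 \<subseteq> \<Omega>"
    and lgd: "\<And>t. t \<in> \<Omega> \<Longrightarrow> (lg has_field_derivative 1/t) (at t)"
    and lge: "\<And>t. t \<in> \<Omega> \<Longrightarrow> exp (lg t) = t"
    and S: "open S" "Hs \<sigma> 1 \<subseteq> S"
    and s0: "sol (\<lambda>t. A t / t^2) S v0 v0'" and s1: "sol (\<lambda>t. A t / t^2) S v1 v1'"
    and W: "\<And>t. t \<in> Hs \<sigma> 1 \<Longrightarrow> v0 t * v1' t - v0' t * v1 t \<noteq> 0"
  shows "\<exists>p0 p1 N. (p0, p1) \<noteq> (0, 0) \<and> ((\<lambda>t. v0 t / N t) \<longlongrightarrow> p0) (at 0 within Hs \<sigma> 1)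
     \<and> ((\<lambda>t. v1 t / N t) \<longlongrightarrow> p1) (at 0 within Hs \<sigma> 1)
     \<and> ((\<lambda>t. t * v0' t / N t) \<longlongrightarrow> of_real ((1 - \<bar>\<mu>\<bar>)/2) * p0) (at 0 within Hs \<sigma> 1)
     \<and> ((\<lambda>t. t * v1' t / N t) \<longlongrightarrow> of_real ((1 - \<bar>\<mu>\<bar>)/2) * p1) (at 0 within Hs \<sigma> 1)"
proof (cases "\<mu> = 0")
  case True
  obtain r V f1 g1 f2 g2 w N where c: "0 < r" "r \<le> 1" "open V" "connected V" "Hs \<sigma> r \<subseteq> V" "V \<subseteq> S"
    "sol (\<lambda>t. A t / t^2) V f1 g1" "sol (\<lambda>t. A t / t^2) V f2 g2" "w \<noteq> 0"
    "\<And>t. t \<in> V \<Longrightarrow> f1 t * g2 t - g1 t * f2 t = w"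
    "((\<lambda>t. f1 t / N t) \<longlongrightarrow> 0) (at 0 within Hs \<sigma> r)"
    "((\<lambda>t. f2 t / N t) \<longlongrightarrow> 1) (at 0 within Hs \<sigma> r)"
    "((\<lambda>t. t * g1 t / N t) \<longlongrightarrow> 0) (at 0 within Hs \<sigma> r)"
    "((\<lambda>t. t * g2 t / N t) \<longlongrightarrow> of_real ((1 - \<bar>\<mu>\<bar>)/2)) (at 0 within Hs \<sigma> r)"
    by (rule case_zero[OF holA A0 True sig Om lgd lge S]) blast+
  show ?thesis by (rule local_from_pair[OF sig c s0 s1 W])
next
  case False
  obtain r V f1 g1 f2 g2 w N where c: "0 < r" "r \<le> 1" "open V" "connected V" "Hs \<sigma> r \<subseteq> V" "V \<subseteq> S"
    "sol (\<lambda>t. A t / t^2) V f1 g1" "sol (\<lambda>t. A t / t^2) V f2 g2" "w \<noteq> 0"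
    "\<And>t. t \<in> V \<Longrightarrow> f1 t * g2 t - g1 t * f2 t = w"
    "((\<lambda>t. f1 t / N t) \<longlongrightarrow> 0) (at 0 within Hs \<sigma> r)"
    "((\<lambda>t. f2 t / N t) \<longlongrightarrow> 1) (at 0 within Hs \<sigma> r)"
    "((\<lambda>t. t * g1 t / N t) \<longlongrightarrow> 0) (at 0 within Hs \<sigma> r)"
    "((\<lambda>t. t * g2 t / N t) \<longlongrightarrow> of_real ((1 - \<bar>\<mu>\<bar>)/2)) (at 0 within Hs \<sigma> r)"
    by (rule case_nonzero[OF holA A0 mu False sig Om lgd lge S]) blast+
  show ?thesis by (rule local_from_pair[OF sig c s0 s1 W])
qed

lemma lg_branch:
  assumes sig: "\<sigma> = 1 \<or> \<sigma> = -1"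
  obtains lg :: "complex \<Rightarrow> complex" and \<Omega> where "open \<Omega>" "Hs \<sigma> 1 \<subseteq> \<Omega>"
    "\<And>t. t \<in> \<Omega> \<Longrightarrow> (lg has_field_derivative 1/t) (at t)"
    "\<And>t. t \<in> \<Omega> \<Longrightarrow> exp (lg t) = t"
proof -
  define c where "c = - (of_real \<sigma> * \<i>)"
  have c0: "c \<noteq> 0" using sig by (auto simp: c_def)
  define \<Omega> where "\<Omega> = (\<lambda>t. c * t) -` (- \<real>\<^sub>\<le>\<^sub>0)"
  show ?thesis
  proof (rule that[of \<Omega> "\<lambda>t. Ln (c * t) - Ln c"])
    show "open \<Omega>" unfolding \<Omega>_def
      by (rule continuous_open_vimage) (auto intro!: continuous_intros simp: closed_nonpos_Reals_complex open_Compl)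
    show "Hs \<sigma> 1 \<subseteq> \<Omega>"
    proof
      fix t assume t: "t \<in> Hs \<sigma> 1"
      show "t \<in> \<Omega>"
      proof (rule ccontr)
        assume "t \<notin> \<Omega>"
        then have "c * t \<in> \<real>\<^sub>\<le>\<^sub>0" by (simp add: \<Omega>_def)
        then have h: "Re (c * t) \<le> 0" "Im (c * t) = 0" by (auto simp: complex_nonpos_Reals_iff)
        have "Re (c * t) = \<sigma> * Im t" "Im (c * t) = - \<sigma> * Re t" by (simp_all add: c_def)
        then have "\<sigma> * Im t \<le> 0" "\<sigma> * Re t = 0" using h by auto
        moreover have "0 \<le> \<sigma> * Im t" using t by (simp add: Hs_def)
        ultimately have "Im t = 0" "Re t = 0" using sig by auto
        then have "t = 0" by (simp add: complex_eq_iff)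
        then show False using t by (simp add: Hs_def)
      qed
    qed
    fix t assume t: "t \<in> \<Omega>"
    then have ct: "c * t \<notin> \<real>\<^sub>\<le>\<^sub>0" by (simp add: \<Omega>_def)
    then have t0: "t \<noteq> 0" by auto
    have "((\<lambda>t. Ln (c * t) - Ln c) has_field_derivative inverse (c * t) * c - 0) (at t)"
    proof -
      have d: "((\<lambda>t. c * t) has_field_derivative c) (at t)" by (auto intro!: derivative_eq_intros)
      show ?thesis
        by (rule DERIV_diff[OF DERIV_chain2[where g="\<lambda>t. c*t", OF has_field_derivative_Ln[OF ct] d]]) simp
    qed
    then show "((\<lambda>t. Ln (c * t) - Ln c) has_field_derivative 1/t) (at t)"
      using c0 t0 by (simp add: field_simps)
    show "exp (Ln (c * t) - Ln c) = t" using c0 t0 by (simp add: exp_diff)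
  qed
qed

lemma chordal_scale:
  assumes "g \<noteq> 0"
  shows "chordal (g * x, g * y) p = chordal (x, y) p"
proof -
  have n: "norm (g * x * snd p - g * y * fst p) = norm g * norm (x * snd p - y * fst p)"
    by (metis norm_mult mult.assoc right_diff_distrib)
  have s: "sqrt ((cmod (g * x))^2 + (cmod (g * y))^2) = norm g * sqrt ((cmod x)^2 + (cmod y)^2)"
  proof -
    have "(cmod (g * x))^2 + (cmod (g * y))^2 = (norm g)^2 * ((cmod x)^2 + (cmod y)^2)"
      by (simp add: norm_mult power_mult_distrib algebra_simps)
    then show ?thesis by (simp add: real_sqrt_mult)
  qed
  show ?thesis unfolding chordal_def using assms by (simp add: n s)
qed

lemma P1_from:
  fixes F :: "'a filter"
  assumes l0: "((\<lambda>x. g x * f0 x) \<longlongrightarrow> a) F" and l1: "((\<lambda>x. g x * f1 x) \<longlongrightarrow> b) F" and ab: "(a, b) \<noteq> (0, 0)"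
  shows "P1_tendsto (\<lambda>x. (f0 x, f1 x)) (a, b) F"
  unfolding P1_tendsto_def
proof (intro conjI ab)
  have ev: "eventually (\<lambda>x. g x \<noteq> 0) F"
  proof (cases "a = 0")
    case False
    show ?thesis using tendsto_imp_eventually_ne[OF l0 False]
      by eventually_elim auto
  next
    case True
    then have "b \<noteq> 0" using ab by auto
    with l1 have "eventually (\<lambda>x. g x * f1 x \<noteq> 0) F" by (rule tendsto_imp_eventually_ne)
    then show ?thesis by eventually_elim auto
  qed
  have pos: "sqrt ((cmod a)^2 + (cmod b)^2) * sqrt ((cmod a)^2 + (cmod b)^2) \<noteq> 0"
    using ab by auto
  have "((\<lambda>x. chordal (g x * f0 x, g x * f1 x) (a, b)) \<longlongrightarrow>
      cmod (a * b - b * a) / (sqrt ((cmod a)^2 + (cmod b)^2) * sqrt ((cmod a)^2 + (cmod b)^2))) F"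
    unfolding chordal_def fst_conv snd_conv
    by (intro tendsto_intros l0 l1 pos)
  then have "((\<lambda>x. chordal (g x * f0 x, g x * f1 x) (a, b)) \<longlongrightarrow> 0) F"
    by (simp add: mult.commute)
  moreover have "eventually (\<lambda>x. chordal (g x * f0 x, g x * f1 x) (a, b) = chordal (f0 x, f1 x) (a, b)) F"
    using ev by eventually_elim (rule chordal_scale)
  ultimately show "((\<lambda>x. chordal (f0 x, f1 x) (a, b)) \<longlongrightarrow> 0) F"
    by (rule Lim_transform_eventually)
qed

lemma Xplus_connected: "connected Xplus"
proof -
  have i: "\<i> \<in> Xplus" by (simp add: Xplus_def)
  have "closed_segment \<i> x \<subseteq> Xplus" if x: "x \<in> Xplus" for x
  proof
    fix z assume "z \<in> closed_segment \<i> x"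
    then obtain u where u: "0 \<le> u" "u \<le> 1" "z = (1 - u) *\<^sub>R \<i> + u *\<^sub>R x"
      by (auto simp: closed_segment_def)
    have imx: "Im x \<ge> 0" using x by (simp add: Xplus_def)
    have imz: "Im z = (1 - u) + u * Im x" using u(3) by simp
    show "z \<in> Xplus"
    proof (cases "u = 1")
      case True then show ?thesis using u x by simp
    next
      case False
      then have "1 - u > 0" using u by simp
      moreover have "u * Im x \<ge> 0" using u imx by simp
      ultimately have "Im z > 0" using imz by linarith
      then show ?thesis by (auto simp: Xplus_def)
    qed
  qed
  then have "starlike Xplus" using i unfolding starlike_def by blast
  then show ?thesis by (rule starlike_imp_connected)
qed

lemma global_W:
  fixes u0 u1 q :: "complex \<Rightarrow> complex" and U :: "complex set"
  assumes U: "open U" "Xplus \<subseteq> U" and hol: "u0 holomorphic_on U" "u1 holomorphic_on U"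
    and ode0: "\<And>x. x \<in> U \<Longrightarrow> deriv (deriv u0) x = q x * u0 x"
    and ode1: "\<And>x. x \<in> U \<Longrightarrow> deriv (deriv u1) x = q x * u1 x"
    and indep: "\<forall>k0 k1. (\<forall>x\<in>Xplus. k0 * u0 x + k1 * u1 x = 0) \<longrightarrow> k0 = 0 \<and> k1 = 0"
  shows "\<And>x. x \<in> Xplus \<Longrightarrow> u0 x * deriv u1 x - deriv u0 x * u1 x \<noteq> 0"
proof -
  define V0 where "V0 = connected_component_set U \<i>"
  have i: "\<i> \<in> Xplus" by (simp add: Xplus_def)
  have V0: "open V0" "connected V0" "Xplus \<subseteq> V0" "V0 \<subseteq> U"
    unfolding V0_def
    by (rule open_connected_component[OF U(1)], rule connected_connected_component,
        rule connected_component_maximal[OF i Xplus_connected U(2)], rule connected_component_subset)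
  have h0: "u0 holomorphic_on V0" and h1: "u1 holomorphic_on V0"
    using hol V0(4) by (auto intro: holomorphic_on_subset)
  have s0: "sol q V0 u0 (deriv u0)" by (rule sol_holo[OF V0(1) h0]) (use ode0 V0(4) in auto)
  have s1: "sol q V0 u1 (deriv u1)" by (rule sol_holo[OF V0(1) h1]) (use ode1 V0(4) in auto)
  obtain c where c: "\<And>t. t \<in> V0 \<Longrightarrow> u0 t * deriv u1 t - deriv u0 t * u1 t = c"
    using wronskian_const[OF V0(1,2) s0 s1] by blast
  fix x assume x: "x \<in> Xplus"
  show "u0 x * deriv u1 x - deriv u0 x * u1 x \<noteq> 0"
  proof
    assume w0: "u0 x * deriv u1 x - deriv u0 x * u1 x = 0"
    have "x \<in> V0" using x V0(3) by auto
    then have c0: "c = 0" using c[of x] w0 by simp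
    show False
    proof (cases "\<forall>y\<in>Xplus. u0 y = 0")
      case True
      then have "\<forall>y\<in>Xplus. 1 * u0 y + 0 * u1 y = 0" by simp
      then show False using indep[rule_format, of 1 0] by simp
    next
      case False
      then obtain x1 where x1: "x1 \<in> Xplus" "u0 x1 \<noteq> 0" by auto
      have "open (V0 \<inter> u0 -` (-{0}))"
        by (rule continuous_open_preimage[OF holomorphic_on_imp_continuous_on[OF h0] V0(1)]) auto
      moreover have "x1 \<in> V0 \<inter> u0 -` (-{0})" using x1 V0(3) by auto
      ultimately obtain e where e: "e > 0" "ball x1 e \<subseteq> V0 \<inter> u0 -` (-{0})"
        by (meson open_contains_ball)
      have dz: "((\<lambda>y. u1 y / u0 y) has_field_derivative 0) (at y)" if y: "y \<in> ball x1 e" for y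
      proof -
        have yV: "y \<in> V0" and ny: "u0 y \<noteq> 0" using y e(2) by auto
        have d0: "(u0 has_field_derivative deriv u0 y) (at y)" and d1: "(u1 has_field_derivative deriv u1 y) (at y)"
          using s0 s1 yV by (auto simp: sol_def)
        have "((\<lambda>y. u1 y / u0 y) has_field_derivative (deriv u1 y * u0 y - u1 y * deriv u0 y) / (u0 y * u0 y)) (at y)"
          by (rule DERIV_divide[OF d1 d0 ny])
        moreover have "deriv u1 y * u0 y - u1 y * deriv u0 y = 0" using c[OF yV] c0 by (simp add: algebra_simps)
        ultimately show ?thesis by simp
      qed
      have "continuous_on (ball x1 e) (\<lambda>y. u1 y / u0 y)"
        using dz by (meson DERIV_isCont continuous_at_imp_continuous_on)
      then obtain k where k: "\<And>y. y \<in> ball x1 e \<Longrightarrow> u1 y / u0 y = k"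
        using DERIV_zero_connected_constant[OF connected_ball open_ball finite.emptyI] dz by blast
      have hol': "(\<lambda>y. u1 y - k * u0 y) holomorphic_on V0" by (intro holomorphic_intros h0 h1)
      have eqB: "u1 z - k * u0 z = 0" if z: "z \<in> ball x1 e" for z
      proof -
        have "u0 z \<noteq> 0" using z e by auto
        then show ?thesis using k[OF z] by (simp add: field_simps)
      qed
      have Be: "ball x1 e \<noteq> {}" "ball x1 e \<subseteq> V0" using e by auto
      have "u1 y - k * u0 y = 0" if y: "y \<in> V0" for y
        using analytic_continuation_open[of "ball x1 e" V0 "\<lambda>y. u1 y - k * u0 y" "\<lambda>y. 0" y,
          OF open_ball V0(1) Be(1) V0(2) Be(2) hol' holomorphic_on_const eqB y] .
      then have "\<forall>y\<in>Xplus. (- k) * u0 y + 1 * u1 y = 0" using V0(3) by auto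
      then show False using indep[rule_format, of "- k" 1] by simp
    qed
  qed
qed

lemma flt0: "at 0 within Xplus = at 0 within Hs 1 1"
  by (rule at_within_nhd[of _ "ball 0 1"]) (auto simp: Xplus_def Hs_def)

lemma flt1: "filterlim (\<lambda>x. 1 - x) (at 0 within Hs (-1) 1) (at 1 within Xplus)"
  unfolding filterlim_at
proof
  show "\<forall>\<^sub>F x in at 1 within Xplus. 1 - x \<in> Hs (- 1) 1 \<and> 1 - x \<noteq> 0"
    unfolding eventually_at
    by (rule exI[of _ 1]) (auto simp: Xplus_def Hs_def dist_norm norm_minus_commute)
  show "((\<lambda>x. 1 - x) \<longlongrightarrow> 0) (at 1 within Xplus)"
    by (rule tendsto_eq_intros) (auto intro!: tendsto_intros)
qed

lemma flti: "filterlim inverse (at 0 within Hs (-1) 1) (inf at_infinity (principal Xplus))"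
  unfolding filterlim_at
proof
  show "\<forall>\<^sub>F x in inf at_infinity (principal Xplus). inverse x \<in> Hs (- 1) 1 \<and> inverse x \<noteq> 0"
    unfolding eventually_inf_principal eventually_at_infinity
  proof (rule exI[of _ 2], intro allI impI)
    fix x :: complex assume x: "2 \<le> norm x" "x \<in> Xplus"
    then have x0: "x \<noteq> 0" by auto
    have "norm (inverse x) = inverse (norm x)" by (rule norm_inverse)
    also have "\<dots> < 1" using x by (simp add: inverse_less_1_iff)
    finally have "norm (inverse x) < 1" .
    moreover have "0 \<le> - Im (inverse x)" using x by (simp add: Xplus_def)
    ultimately show "inverse x \<in> Hs (- 1) 1 \<and> inverse x \<noteq> 0" using x0 by (simp add: Hs_def)
  qed
  show "(inverse \<longlongrightarrow> 0) (inf at_infinity (principal Xplus))"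
    by (rule tendsto_mono[OF inf_le1 tendsto_inverse_0])
qed

definition Qn :: "real \<Rightarrow> real \<Rightarrow> real \<Rightarrow> complex \<Rightarrow> complex" where
  "Qn a b c x = (1 - complex_of_real ((muinf a b c)^2)) * x^2
        + complex_of_real ((muinf a b c)^2 + (mu0 a b c)^2 - (mu1 a b c)^2 - 1) * x
        + (1 - complex_of_real ((mu0 a b c)^2))"

lemma qpot_Qn: "qpot a b c x = - (1/4) * Qn a b c x / (x^2 * (1 - x)^2)"
  by (simp add: qpot_def Qn_def)

lemma lg_ex:
  assumes "\<sigma> = 1 \<or> \<sigma> = -1"
  shows "\<exists>(lg::complex\<Rightarrow>complex) \<Omega>. open \<Omega> \<and> Hs \<sigma> 1 \<subseteq> \<Omega> \<and> (\<forall>t\<in>\<Omega>. (lg has_field_derivative 1/t) (at t)) \<and> (\<forall>t\<in>\<Omega>. exp (lg t) = t)"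
proof (rule lg_branch[OF assms])
  fix \<Omega> lg
  assume "open \<Omega>" "Hs \<sigma> 1 \<subseteq> \<Omega>" "\<And>t. t \<in> \<Omega> \<Longrightarrow> ((lg::complex\<Rightarrow>complex) has_field_derivative 1/t) (at t)"
    "\<And>t. t \<in> \<Omega> \<Longrightarrow> exp (lg t) = t"
  then show ?thesis by blast
qed

lemma P1_from2:
  fixes F :: "'a filter"
  assumes l0: "(h0 \<longlongrightarrow> a) F" and l1: "(h1 \<longlongrightarrow> b) F" and ab: "(a, b) \<noteq> (0, 0)"
    and ev: "eventually (\<lambda>x. h0 x = g x * f0 x \<and> h1 x = g x * f1 x) F"
  shows "P1_tendsto (\<lambda>x. (f0 x, f1 x)) (a, b) F"
proof (rule P1_from[OF _ _ ab])
  show "((\<lambda>x. g x * f0 x) \<longlongrightarrow> a) F"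
    using l0 by (rule Lim_transform_eventually) (use ev in \<open>eventually_elim, simp\<close>)
  show "((\<lambda>x. g x * f1 x) \<longlongrightarrow> b) F"
    using l1 by (rule Lim_transform_eventually) (use ev in \<open>eventually_elim, simp\<close>)
qed

lemma point0:
  fixes u0 u1 :: "complex \<Rightarrow> complex"
  assumes U: "open U" "Xplus \<subseteq> U" "0 \<notin> U"
    and hol: "u0 holomorphic_on U" "u1 holomorphic_on U"
    and ode0: "\<And>x. x \<in> U \<Longrightarrow> deriv (deriv u0) x = qpot a b c x * u0 x"
    and ode1: "\<And>x. x \<in> U \<Longrightarrow> deriv (deriv u1) x = qpot a b c x * u1 x"
    and W: "\<And>x. x \<in> Xplus \<Longrightarrow> u0 x * deriv u1 x - deriv u0 x * u1 x \<noteq> 0"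
    and mu: "\<bar>mu0 a b c\<bar> < 1"
  shows "\<exists>p. P1_tendsto (\<lambda>x. (u0 x, u1 x)) p (at 0 within Xplus)
              \<and> P1_tendsto (\<lambda>x. (deriv u0 x, deriv u1 x)) p (at 0 within Xplus)"
proof -
  define A where "A = (\<lambda>t. - (1/4) * Qn a b c t / (1 - t)^2)"
  have holA: "A holomorphic_on ball 0 1"
    unfolding A_def Qn_def by (intro holomorphic_intros) auto
  have A0: "A 0 = - of_real ((1 - (mu0 a b c)^2)/4)"
    by (simp add: A_def Qn_def)
  have qA: "qpot a b c t = A t / t^2" for t
    by (simp add: qpot_Qn A_def mult.commute)
  have sig: "(1::real) = 1 \<or> (1::real) = -1" by simp
  obtain lg :: "complex \<Rightarrow> complex" and \<Omega> where lg0: "open \<Omega>" "Hs 1 1 \<subseteq> \<Omega>"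
    "\<forall>t\<in>\<Omega>. (lg has_field_derivative 1/t) (at t)" "\<forall>t\<in>\<Omega>. exp (lg t) = t"
    using lg_ex[OF sig] by blast
  have lgd: "\<And>t. t \<in> \<Omega> \<Longrightarrow> (lg has_field_derivative 1/t) (at t)" using lg0(3) by blast
  have lge: "\<And>t. t \<in> \<Omega> \<Longrightarrow> exp (lg t) = t" using lg0(4) by blast
  have HX: "Hs 1 1 \<subseteq> Xplus" by (auto simp: Hs_def Xplus_def)
  have s0: "sol (\<lambda>t. A t / t^2) U u0 (deriv u0)"
    by (rule sol_holo[OF U(1) hol(1)]) (simp add: ode0 qA)
  have s1: "sol (\<lambda>t. A t / t^2) U u1 (deriv u1)"
    by (rule sol_holo[OF U(1) hol(2)]) (simp add: ode1 qA)
  have W': "\<And>t. t \<in> Hs 1 1 \<Longrightarrow> u0 t * deriv u1 t - deriv u0 t * u1 t \<noteq> 0"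
    using W HX by auto
  have ex: "\<exists>p0 p1 N. (p0, p1) \<noteq> (0, 0) \<and> ((\<lambda>t. u0 t / N t) \<longlongrightarrow> p0) (at 0 within Hs 1 1)
     \<and> ((\<lambda>t. u1 t / N t) \<longlongrightarrow> p1) (at 0 within Hs 1 1)
     \<and> ((\<lambda>t. t * deriv u0 t / N t) \<longlongrightarrow> of_real ((1 - \<bar>mu0 a b c\<bar>)/2) * p0) (at 0 within Hs 1 1)
     \<and> ((\<lambda>t. t * deriv u1 t / N t) \<longlongrightarrow> of_real ((1 - \<bar>mu0 a b c\<bar>)/2) * p1) (at 0 within Hs 1 1)"
    by (rule local_main[OF holA A0 mu sig lg0(1,2) lgd lge U(1) order.trans[OF HX U(2)] s0 s1 W'])
  then obtain p0 p1 N where res: "(p0, p1) \<noteq> (0, 0)" "((\<lambda>t. u0 t / N t) \<longlongrightarrow> p0) (at 0 within Hs 1 1)"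
     "((\<lambda>t. u1 t / N t) \<longlongrightarrow> p1) (at 0 within Hs 1 1)"
     "((\<lambda>t. t * deriv u0 t / N t) \<longlongrightarrow> of_real ((1 - \<bar>mu0 a b c\<bar>)/2) * p0) (at 0 within Hs 1 1)"
     "((\<lambda>t. t * deriv u1 t / N t) \<longlongrightarrow> of_real ((1 - \<bar>mu0 a b c\<bar>)/2) * p1) (at 0 within Hs 1 1)"
    by blast
  define \<kappa> :: complex where "\<kappa> = of_real ((1 - \<bar>mu0 a b c\<bar>)/2)"
  have k0: "\<kappa> \<noteq> 0" using mu by (simp add: \<kappa>_def)
  have r0: "((\<lambda>t. u0 t / N t) \<longlongrightarrow> p0) (at 0 within Xplus)" using res(2) by (simp add: flt0)
  have r1: "((\<lambda>t. u1 t / N t) \<longlongrightarrow> p1) (at 0 within Xplus)" using res(3) by (simp add: flt0)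
  have r2: "((\<lambda>t. t * deriv u0 t / N t / \<kappa>) \<longlongrightarrow> p0) (at 0 within Xplus)"
    using tendsto_divide[OF res(4) tendsto_const k0] k0 by (simp add: flt0 \<kappa>_def)
  have r3: "((\<lambda>t. t * deriv u1 t / N t / \<kappa>) \<longlongrightarrow> p1) (at 0 within Xplus)"
    using tendsto_divide[OF res(5) tendsto_const k0] k0 by (simp add: flt0 \<kappa>_def)
  have "P1_tendsto (\<lambda>x. (u0 x, u1 x)) (p0, p1) (at 0 within Xplus)"
    by (rule P1_from2[OF r0 r1 res(1), of "\<lambda>t. 1 / N t"]) simp
  moreover have "P1_tendsto (\<lambda>x. (deriv u0 x, deriv u1 x)) (p0, p1) (at 0 within Xplus)"
    by (rule P1_from2[OF r2 r3 res(1), of "\<lambda>t. t / N t / \<kappa>"]) simp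
  ultimately show ?thesis by blast
qed

lemma chain_refl:
  assumes "(f has_field_derivative D) (at (1 - y))"
  shows "((\<lambda>y. f (1 - y)) has_field_derivative - D) (at y)"
proof -
  have d: "((\<lambda>y. 1 - y) has_field_derivative -1) (at y)" by (auto intro!: derivative_eq_intros)
  show ?thesis using DERIV_chain2[where g="\<lambda>y. 1 - y", OF assms d] by simp
qed

lemma Qn_1: "Qn a b c 1 = of_real (1 - (mu1 a b c)^2)"
  by (simp add: Qn_def)

lemma point1:
  fixes u0 u1 :: "complex \<Rightarrow> complex"
  assumes U: "open U" "Xplus \<subseteq> U" "0 \<notin> U" "1 \<notin> U"
    and hol: "u0 holomorphic_on U" "u1 holomorphic_on U"
    and ode0: "\<And>x. x \<in> U \<Longrightarrow> deriv (deriv u0) x = qpot a b c x * u0 x"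
    and ode1: "\<And>x. x \<in> U \<Longrightarrow> deriv (deriv u1) x = qpot a b c x * u1 x"
    and W: "\<And>x. x \<in> Xplus \<Longrightarrow> u0 x * deriv u1 x - deriv u0 x * u1 x \<noteq> 0"
    and mu: "\<bar>mu1 a b c\<bar> < 1"
  shows "\<exists>p. P1_tendsto (\<lambda>x. (u0 x, u1 x)) p (at 1 within Xplus)
              \<and> P1_tendsto (\<lambda>x. (deriv u0 x, deriv u1 x)) p (at 1 within Xplus)"
proof -
  define A where "A = (\<lambda>y. - (1/4) * Qn a b c (1 - y) / (1 - y)^2)"
  have holA: "A holomorphic_on ball 0 1"
    unfolding A_def Qn_def by (intro holomorphic_intros) auto
  have A0: "A 0 = - of_real ((1 - (mu1 a b c)^2)/4)"
    by (simp add: A_def Qn_1)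
  have qA: "qpot a b c (1 - y) = A y / y^2" for y
    by (simp add: qpot_Qn A_def mult.commute)
  have sig: "(-1::real) = 1 \<or> (-1::real) = -1" by simp
  obtain lg :: "complex \<Rightarrow> complex" and \<Omega> where lg0: "open \<Omega>" "Hs (-1) 1 \<subseteq> \<Omega>"
    "\<forall>t\<in>\<Omega>. (lg has_field_derivative 1/t) (at t)" "\<forall>t\<in>\<Omega>. exp (lg t) = t"
    using lg_ex[OF sig] by blast
  have lgd: "\<And>t. t \<in> \<Omega> \<Longrightarrow> (lg has_field_derivative 1/t) (at t)" using lg0(3) by blast
  have lge: "\<And>t. t \<in> \<Omega> \<Longrightarrow> exp (lg t) = t" using lg0(4) by blast
  define S where "S = (\<lambda>y. 1 - y) -` U"
  have oS: "open S" unfolding S_def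
    by (rule continuous_open_vimage[OF U(1)]) (auto intro!: continuous_intros)
  have HS: "Hs (-1) 1 \<subseteq> S"
  proof
    fix y assume y: "y \<in> Hs (-1) 1"
    then have "1 - y \<in> Xplus" by (auto simp: Hs_def Xplus_def)
    then show "y \<in> S" using U(2) by (auto simp: S_def)
  qed
  have solv: "sol (\<lambda>t. A t / t^2) S (\<lambda>y. u (1 - y)) (\<lambda>y. - deriv u (1 - y))"
    if holu: "u holomorphic_on U" and odeu: "\<And>x. x \<in> U \<Longrightarrow> deriv (deriv u) x = qpot a b c x * u x" for u
    unfolding sol_def
  proof
    fix y assume y: "y \<in> S"
    then have x: "1 - y \<in> U" by (simp add: S_def)
    have d1: "(u has_field_derivative deriv u (1 - y)) (at (1 - y))"
      by (rule holomorphic_derivI[OF holu U(1) x])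
    have "deriv u holomorphic_on U" by (rule holomorphic_deriv[OF holu U(1)])
    then have d2: "(deriv u has_field_derivative deriv (deriv u) (1 - y)) (at (1 - y))"
      by (rule holomorphic_derivI[OF _ U(1) x])
    show "((\<lambda>y. u (1 - y)) has_field_derivative - deriv u (1 - y)) (at y) \<and>
      ((\<lambda>y. - deriv u (1 - y)) has_field_derivative A y / y^2 * u (1 - y)) (at y)"
    proof
      show "((\<lambda>y. u (1 - y)) has_field_derivative - deriv u (1 - y)) (at y)"
        by (rule chain_refl[OF d1])
      have "((\<lambda>y. - deriv u (1 - y)) has_field_derivative - (- deriv (deriv u) (1 - y))) (at y)"
        by (rule DERIV_minus[OF chain_refl[OF d2]])
      then show "((\<lambda>y. - deriv u (1 - y)) has_field_derivative A y / y^2 * u (1 - y)) (at y)"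
        using odeu[OF x] qA[of y] by simp
    qed
  qed
  have s0: "sol (\<lambda>t. A t / t^2) S (\<lambda>y. u0 (1 - y)) (\<lambda>y. - deriv u0 (1 - y))" by (rule solv[OF hol(1) ode0])
  have s1: "sol (\<lambda>t. A t / t^2) S (\<lambda>y. u1 (1 - y)) (\<lambda>y. - deriv u1 (1 - y))" by (rule solv[OF hol(2) ode1])
  have W': "\<And>t. t \<in> Hs (-1) 1 \<Longrightarrow> u0 (1 - t) * (- deriv u1 (1 - t)) - (- deriv u0 (1 - t)) * u1 (1 - t) \<noteq> 0"
  proof -
    fix t assume "t \<in> Hs (-1) 1"
    then have "1 - t \<in> Xplus" by (auto simp: Hs_def Xplus_def)
    from W[OF this] show "u0 (1 - t) * (- deriv u1 (1 - t)) - (- deriv u0 (1 - t)) * u1 (1 - t) \<noteq> 0"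
      by (simp add: algebra_simps)
  qed
  have ex: "\<exists>p0 p1 N. (p0, p1) \<noteq> (0, 0) \<and> ((\<lambda>t. u0 (1 - t) / N t) \<longlongrightarrow> p0) (at 0 within Hs (-1) 1)
     \<and> ((\<lambda>t. u1 (1 - t) / N t) \<longlongrightarrow> p1) (at 0 within Hs (-1) 1)
     \<and> ((\<lambda>t. t * (- deriv u0 (1 - t)) / N t) \<longlongrightarrow> of_real ((1 - \<bar>mu1 a b c\<bar>)/2) * p0) (at 0 within Hs (-1) 1)
     \<and> ((\<lambda>t. t * (- deriv u1 (1 - t)) / N t) \<longlongrightarrow> of_real ((1 - \<bar>mu1 a b c\<bar>)/2) * p1) (at 0 within Hs (-1) 1)"
    by (rule local_main[OF holA A0 mu sig lg0(1,2) lgd lge oS HS s0 s1 W'])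
  then obtain p0 p1 N where res: "(p0, p1) \<noteq> (0, 0)" "((\<lambda>t. u0 (1 - t) / N t) \<longlongrightarrow> p0) (at 0 within Hs (-1) 1)"
     "((\<lambda>t. u1 (1 - t) / N t) \<longlongrightarrow> p1) (at 0 within Hs (-1) 1)"
     "((\<lambda>t. t * (- deriv u0 (1 - t)) / N t) \<longlongrightarrow> of_real ((1 - \<bar>mu1 a b c\<bar>)/2) * p0) (at 0 within Hs (-1) 1)"
     "((\<lambda>t. t * (- deriv u1 (1 - t)) / N t) \<longlongrightarrow> of_real ((1 - \<bar>mu1 a b c\<bar>)/2) * p1) (at 0 within Hs (-1) 1)"
    by blast
  define \<kappa> :: complex where "\<kappa> = of_real ((1 - \<bar>mu1 a b c\<bar>)/2)"
  have k0: "\<kappa> \<noteq> 0" using mu by (simp add: \<kappa>_def)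
  have r0: "((\<lambda>x. u0 x / N (1 - x)) \<longlongrightarrow> p0) (at 1 within Xplus)"
    using filterlim_compose[OF res(2) flt1] by simp
  have r1: "((\<lambda>x. u1 x / N (1 - x)) \<longlongrightarrow> p1) (at 1 within Xplus)"
    using filterlim_compose[OF res(3) flt1] by simp
  have r2: "((\<lambda>x. (1 - x) * (- deriv u0 x) / N (1 - x) / \<kappa>) \<longlongrightarrow> p0) (at 1 within Xplus)"
    using tendsto_divide[OF filterlim_compose[OF res(4) flt1] tendsto_const k0] k0 by (simp add: \<kappa>_def)
  have r3: "((\<lambda>x. (1 - x) * (- deriv u1 x) / N (1 - x) / \<kappa>) \<longlongrightarrow> p1) (at 1 within Xplus)"
    using tendsto_divide[OF filterlim_compose[OF res(5) flt1] tendsto_const k0] k0 by (simp add: \<kappa>_def)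
  have "P1_tendsto (\<lambda>x. (u0 x, u1 x)) (p0, p1) (at 1 within Xplus)"
    by (rule P1_from2[OF r0 r1 res(1), of "\<lambda>x. 1 / N (1 - x)"]) simp
  moreover have "P1_tendsto (\<lambda>x. (deriv u0 x, deriv u1 x)) (p0, p1) (at 1 within Xplus)"
    by (rule P1_from2[OF r2 r3 res(1), of "\<lambda>x. - (1 - x) / N (1 - x) / \<kappa>"]) (simp add: minus_divide_left algebra_simps)
  ultimately show ?thesis by blast
qed

definition Ainf :: "real \<Rightarrow> real \<Rightarrow> real \<Rightarrow> complex \<Rightarrow> complex" where
  "Ainf a b c t = - (1/4) * ((1 - complex_of_real ((muinf a b c)^2))
        + complex_of_real ((muinf a b c)^2 + (mu0 a b c)^2 - (mu1 a b c)^2 - 1) * t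
        + (1 - complex_of_real ((mu0 a b c)^2)) * t^2) / (t - 1)^2"

lemma inv_poly_id:
  fixes P B C t :: complex
  assumes t: "t \<noteq> 0" "t \<noteq> 1"
  shows "(P * (inverse t)^2 + B * inverse t + C) / ((inverse t)^2 * (1 - inverse t)^2)
       = (P + B * t + C * t^2) / (t - 1)^2 * t^2"
proof -
  have t1: "t - 1 \<noteq> 0" using t by auto
  have e1: "P * (inverse t)^2 + B * inverse t + C = (P + B*t + C*t^2) / t^2"
    using t by (simp add: field_simps power2_eq_square)
  have e2: "(inverse t)^2 * (1 - inverse t)^2 = (t - 1)^2 / t^4"
    using t by (simp add: field_simps power2_eq_square power4_eq_xxxx)
  have gen: "(X / T) / (D / (T * T)) = X / D * T" if "T \<noteq> 0" "D \<noteq> 0" for X T D :: complex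
    using that by (simp add: field_simps)
  have t4: "t^4 = t^2 * t^2" by (simp add: power4_eq_xxxx power2_eq_square)
  show ?thesis unfolding e1 e2 t4 by (rule gen) (use t t1 in auto)
qed

lemma qpot_inv:
  assumes "t \<noteq> 0" "t \<noteq> 1"
  shows "qpot a b c (inverse t) = Ainf a b c t * t^2"
proof -
  have "qpot a b c (inverse t) = - (1/4) * (Qn a b c (inverse t) / ((inverse t)^2 * (1 - inverse t)^2))"
    unfolding qpot_Qn by simp
  also have "Qn a b c (inverse t) / ((inverse t)^2 * (1 - inverse t)^2) =
     ((1 - complex_of_real ((muinf a b c)^2))
        + complex_of_real ((muinf a b c)^2 + (mu0 a b c)^2 - (mu1 a b c)^2 - 1) * t
        + (1 - complex_of_real ((mu0 a b c)^2)) * t^2) / (t - 1)^2 * t^2"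
    unfolding Qn_def by (rule inv_poly_id[OF assms])
  finally show ?thesis unfolding Ainf_def by simp
qed

lemma pointinf:
  fixes u0 u1 :: "complex \<Rightarrow> complex"
  assumes U: "open U" "Xplus \<subseteq> U" "0 \<notin> U" "1 \<notin> U"
    and hol: "u0 holomorphic_on U" "u1 holomorphic_on U"
    and ode0: "\<And>x. x \<in> U \<Longrightarrow> deriv (deriv u0) x = qpot a b c x * u0 x"
    and ode1: "\<And>x. x \<in> U \<Longrightarrow> deriv (deriv u1) x = qpot a b c x * u1 x"
    and W: "\<And>x. x \<in> Xplus \<Longrightarrow> u0 x * deriv u1 x - deriv u0 x * u1 x \<noteq> 0"
    and mu: "\<bar>muinf a b c\<bar> < 1"
  shows "\<exists>p. P1_tendsto (\<lambda>x. (u0 x, u1 x)) p (inf at_infinity (principal Xplus))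
              \<and> P1_tendsto (\<lambda>x. (deriv u0 x, deriv u1 x)) p (inf at_infinity (principal Xplus))"
proof -
  define A where "A = Ainf a b c"
  have holA: "A holomorphic_on ball 0 1"
    unfolding A_def Ainf_def by (intro holomorphic_intros) auto
  have A0: "A 0 = - of_real ((1 - (muinf a b c)^2)/4)"
    by (simp add: A_def Ainf_def)
  have sig: "(-1::real) = 1 \<or> (-1::real) = -1" by simp
  obtain lg :: "complex \<Rightarrow> complex" and \<Omega> where lg0: "open \<Omega>" "Hs (-1) 1 \<subseteq> \<Omega>"
    "\<forall>t\<in>\<Omega>. (lg has_field_derivative 1/t) (at t)" "\<forall>t\<in>\<Omega>. exp (lg t) = t"
    using lg_ex[OF sig] by blast
  have lgd: "\<And>t. t \<in> \<Omega> \<Longrightarrow> (lg has_field_derivative 1/t) (at t)" using lg0(3) by blast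
  have lge: "\<And>t. t \<in> \<Omega> \<Longrightarrow> exp (lg t) = t" using lg0(4) by blast
  define S where "S = (- {0}) \<inter> inverse -` U"
  have oS: "open S" unfolding S_def
    by (rule continuous_open_preimage[OF _ _ U(1)]) (auto intro!: continuous_intros)
  have HS: "Hs (-1) 1 \<subseteq> S"
  proof
    fix y assume y: "y \<in> Hs (-1) 1"
    then have y0: "y \<noteq> 0" and yn: "cmod y < 1" and yi: "Im y \<le> 0" by (auto simp: Hs_def)
    have "inverse y \<noteq> 1" using yn by auto
    moreover have "Im (inverse y) \<ge> 0" using yi by simp (rule divide_nonpos_nonneg, auto)
    ultimately have "inverse y \<in> Xplus" using y0 by (simp add: Xplus_def)
    then show "y \<in> S" using U(2) y0 by (auto simp: S_def)
  qed
  have solv: "sol (\<lambda>t. A t / t^2) S (\<lambda>t. t * u (inverse t)) (\<lambda>t. u (inverse t) - deriv u (inverse t) / t)"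
    if holu: "u holomorphic_on U" and odeu: "\<And>x. x \<in> U \<Longrightarrow> deriv (deriv u) x = qpot a b c x * u x" for u
    unfolding sol_def
  proof
    fix t assume t: "t \<in> S"
    then have x: "inverse t \<in> U" and t0: "t \<noteq> 0" by (auto simp: S_def)
    have t1: "t \<noteq> 1" using x U(4) by auto
    have d1: "(u has_field_derivative deriv u (inverse t)) (at (inverse t))"
      by (rule holomorphic_derivI[OF holu U(1) x])
    have "deriv u holomorphic_on U" by (rule holomorphic_deriv[OF holu U(1)])
    then have d2: "(deriv u has_field_derivative deriv (deriv u) (inverse t)) (at (inverse t))"
      by (rule holomorphic_derivI[OF _ U(1) x])
    have dinv: "(inverse has_field_derivative - (inverse t ^ Suc (Suc 0))) (at t)"
      using DERIV_inverse[OF t0] by simp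
    have c1: "((\<lambda>t. u (inverse t)) has_field_derivative deriv u (inverse t) * - (inverse t ^ Suc (Suc 0))) (at t)"
      by (rule DERIV_chain2[where g=inverse, OF d1 dinv])
    have c2: "((\<lambda>t. deriv u (inverse t)) has_field_derivative deriv (deriv u) (inverse t) * - (inverse t ^ Suc (Suc 0))) (at t)"
      by (rule DERIV_chain2[where g=inverse, OF d2 dinv])
    have D1: "((\<lambda>t. t * u (inverse t)) has_field_derivative u (inverse t) - deriv u (inverse t) / t) (at t)"
      by (rule DERIV_cong[OF DERIV_mult[OF DERIV_ident c1]]) (use t0 in \<open>simp add: field_simps\<close>)
    have D2: "((\<lambda>t. u (inverse t) - deriv u (inverse t) / t) has_field_derivative
        deriv u (inverse t) * - (inverse t ^ Suc (Suc 0)) -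
        (deriv (deriv u) (inverse t) * - (inverse t ^ Suc (Suc 0)) * t - deriv u (inverse t) * 1) / (t * t)) (at t)"
      by (rule DERIV_diff[OF c1 DERIV_divide[OF c2 DERIV_ident t0]])
    have "deriv u (inverse t) * - (inverse t ^ Suc (Suc 0)) -
        (deriv (deriv u) (inverse t) * - (inverse t ^ Suc (Suc 0)) * t - deriv u (inverse t) * 1) / (t * t)
        = deriv (deriv u) (inverse t) / (t * t * t)"
      using t0 by (simp add: field_simps)
    also have "\<dots> = A t / t^2 * (t * u (inverse t))"
      unfolding odeu[OF x] qpot_inv[OF t0 t1] A_def using t0 by (simp add: field_simps power2_eq_square)
    finally show "((\<lambda>t. t * u (inverse t)) has_field_derivative u (inverse t) - deriv u (inverse t) / t) (at t) \<and>
      ((\<lambda>t. u (inverse t) - deriv u (inverse t) / t) has_field_derivative A t / t^2 * (t * u (inverse t))) (at t)"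
      using D1 D2 by simp
  qed
  define v0 where "v0 = (\<lambda>t. t * u0 (inverse t))"
  define v1 where "v1 = (\<lambda>t. t * u1 (inverse t))"
  define v0' where "v0' = (\<lambda>t. u0 (inverse t) - deriv u0 (inverse t) / t)"
  define v1' where "v1' = (\<lambda>t. u1 (inverse t) - deriv u1 (inverse t) / t)"
  have s0: "sol (\<lambda>t. A t / t^2) S v0 v0'" unfolding v0_def v0'_def by (rule solv[OF hol(1) ode0])
  have s1: "sol (\<lambda>t. A t / t^2) S v1 v1'" unfolding v1_def v1'_def by (rule solv[OF hol(2) ode1])
  have W': "\<And>t. t \<in> Hs (-1) 1 \<Longrightarrow> v0 t * v1' t - v0' t * v1 t \<noteq> 0"
  proof -
    fix t assume t: "t \<in> Hs (-1) 1"
    then have t0: "t \<noteq> 0" by (simp add: Hs_def)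
    have "inverse t \<in> Xplus"
    proof -
      have "t \<in> S" using HS t by auto
      then have "inverse t \<in> U" by (simp add: S_def)
      have yn: "cmod t < 1" and yi: "Im t \<le> 0" using t by (auto simp: Hs_def)
      have "inverse t \<noteq> 1" using yn by auto
      moreover have "Im (inverse t) \<ge> 0" using yi by simp (rule divide_nonpos_nonneg, auto)
      ultimately show ?thesis using t0 by (simp add: Xplus_def)
    qed
    from W[OF this] have "u0 (inverse t) * deriv u1 (inverse t) - deriv u0 (inverse t) * u1 (inverse t) \<noteq> 0" .
    moreover have "v0 t * v1' t - v0' t * v1 t = - (u0 (inverse t) * deriv u1 (inverse t) - deriv u0 (inverse t) * u1 (inverse t))"
      using t0 by (simp add: v0_def v1_def v0'_def v1'_def field_simps)
    ultimately show "v0 t * v1' t - v0' t * v1 t \<noteq> 0" by simp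
  qed
  have ex: "\<exists>p0 p1 N. (p0, p1) \<noteq> (0, 0) \<and> ((\<lambda>t. v0 t / N t) \<longlongrightarrow> p0) (at 0 within Hs (-1) 1)
     \<and> ((\<lambda>t. v1 t / N t) \<longlongrightarrow> p1) (at 0 within Hs (-1) 1)
     \<and> ((\<lambda>t. t * v0' t / N t) \<longlongrightarrow> of_real ((1 - \<bar>muinf a b c\<bar>)/2) * p0) (at 0 within Hs (-1) 1)
     \<and> ((\<lambda>t. t * v1' t / N t) \<longlongrightarrow> of_real ((1 - \<bar>muinf a b c\<bar>)/2) * p1) (at 0 within Hs (-1) 1)"
    by (rule local_main[OF holA A0 mu sig lg0(1,2) lgd lge oS HS s0 s1 W'])
  then obtain p0 p1 N where res: "(p0, p1) \<noteq> (0, 0)" "((\<lambda>t. v0 t / N t) \<longlongrightarrow> p0) (at 0 within Hs (-1) 1)"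
     "((\<lambda>t. v1 t / N t) \<longlongrightarrow> p1) (at 0 within Hs (-1) 1)"
     "((\<lambda>t. t * v0' t / N t) \<longlongrightarrow> of_real ((1 - \<bar>muinf a b c\<bar>)/2) * p0) (at 0 within Hs (-1) 1)"
     "((\<lambda>t. t * v1' t / N t) \<longlongrightarrow> of_real ((1 - \<bar>muinf a b c\<bar>)/2) * p1) (at 0 within Hs (-1) 1)"
    by blast
  define \<kappa> :: complex where "\<kappa> = of_real ((1 - \<bar>muinf a b c\<bar>)/2)"
  have k1: "1 - \<kappa> \<noteq> 0"
  proof
    assume "1 - \<kappa> = 0"
    then have "(1::complex) = of_real ((1 - \<bar>muinf a b c\<bar>)/2)" by (simp add: \<kappa>_def)
    then have "(1::real) = (1 - \<bar>muinf a b c\<bar>)/2" by (metis of_real_1 of_real_eq_iff)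
    then show False by simp
  qed
  let ?F = "inf at_infinity (principal Xplus)"
  have evx: "eventually (\<lambda>x. x \<noteq> 0) ?F"
    by (rule filter_leD[OF inf_le1]) (auto simp: eventually_at_infinity intro!: exI[of _ 1])
  have r0: "((\<lambda>x. v0 (inverse x) / N (inverse x)) \<longlongrightarrow> p0) ?F"
    using filterlim_compose[OF res(2) flti] by simp
  have r1: "((\<lambda>x. v1 (inverse x) / N (inverse x)) \<longlongrightarrow> p1) ?F"
    using filterlim_compose[OF res(3) flti] by simp
  have q0: "((\<lambda>t. (v0 t / N t - t * v0' t / N t) / (1 - \<kappa>)) \<longlongrightarrow> (p0 - \<kappa> * p0) / (1 - \<kappa>)) (at 0 within Hs (-1) 1)"
    by (intro tendsto_divide tendsto_diff res(2) res(4)[folded \<kappa>_def] tendsto_const k1)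
  have q1: "((\<lambda>t. (v1 t / N t - t * v1' t / N t) / (1 - \<kappa>)) \<longlongrightarrow> (p1 - \<kappa> * p1) / (1 - \<kappa>)) (at 0 within Hs (-1) 1)"
    by (intro tendsto_divide tendsto_diff res(3) res(5)[folded \<kappa>_def] tendsto_const k1)
  have pp: "(p - \<kappa> * p) / (1 - \<kappa>) = p" for p using k1 by (simp add: field_simps)
  have r2: "((\<lambda>x. (v0 (inverse x) / N (inverse x) - inverse x * v0' (inverse x) / N (inverse x)) / (1 - \<kappa>)) \<longlongrightarrow> p0) ?F"
    using filterlim_compose[OF q0 flti] unfolding pp by simp
  have r3: "((\<lambda>x. (v1 (inverse x) / N (inverse x) - inverse x * v1' (inverse x) / N (inverse x)) / (1 - \<kappa>)) \<longlongrightarrow> p1) ?F"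
    using filterlim_compose[OF q1 flti] unfolding pp by simp
  have "P1_tendsto (\<lambda>x. (u0 x, u1 x)) (p0, p1) ?F"
    by (rule P1_from2[OF r0 r1 res(1), of "\<lambda>x. inverse x / N (inverse x)"]) (simp add: v0_def v1_def)
  moreover have "P1_tendsto (\<lambda>x. (deriv u0 x, deriv u1 x)) (p0, p1) ?F"
  proof (rule P1_from2[OF r2 r3 res(1), of "\<lambda>x. 1 / N (inverse x) / (1 - \<kappa>)"])
    show "\<forall>\<^sub>F x in ?F.
       (v0 (inverse x) / N (inverse x) - inverse x * v0' (inverse x) / N (inverse x)) / (1 - \<kappa>) =
       1 / N (inverse x) / (1 - \<kappa>) * deriv u0 x \<and>
       (v1 (inverse x) / N (inverse x) - inverse x * v1' (inverse x) / N (inverse x)) / (1 - \<kappa>) =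
       1 / N (inverse x) / (1 - \<kappa>) * deriv u1 x"
      using evx
    proof eventually_elim
      case (elim x)
      have e0: "v0 (inverse x) - inverse x * v0' (inverse x) = deriv u0 x"
        using elim by (simp add: v0_def v0'_def field_simps)
      have e1: "v1 (inverse x) - inverse x * v1' (inverse x) = deriv u1 x"
        using elim by (simp add: v1_def v1'_def field_simps)
      show ?case using e0 e1 by (simp add: diff_divide_distrib[symmetric])
    qed
  qed
  ultimately show ?thesis by blast
qed

theorem lemma2p1:
  fixes a b c :: real and u0 u1 :: "complex \<Rightarrow> complex"
  assumes "\<bar>1 - c\<bar> < 1" and "\<bar>c - a - b\<bar> < 1" and "\<bar>b - a\<bar> < 1"
    and "sl_solution a b c u0" and "sl_solution a b c u1"
    and "\<forall>k0 k1. (\<forall>x\<in>Xplus. k0 * u0 x + k1 * u1 x = 0) \<longrightarrow> k0 = 0 \<and> k1 = 0"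
  shows "(\<exists>p. P1_tendsto (\<lambda>x. (u0 x, u1 x)) p (at 0 within Xplus)
              \<and> P1_tendsto (\<lambda>x. (deriv u0 x, deriv u1 x)) p (at 0 within Xplus))
       \<and> (\<exists>p. P1_tendsto (\<lambda>x. (u0 x, u1 x)) p (at 1 within Xplus)
              \<and> P1_tendsto (\<lambda>x. (deriv u0 x, deriv u1 x)) p (at 1 within Xplus))
       \<and> (\<exists>p. P1_tendsto (\<lambda>x. (u0 x, u1 x)) p (inf at_infinity (principal Xplus))
              \<and> P1_tendsto (\<lambda>x. (deriv u0 x, deriv u1 x)) p (inf at_infinity (principal Xplus)))"
proof -
  obtain U0 where U0: "open U0" "Xplus \<subseteq> U0" "0 \<notin> U0" "1 \<notin> U0" "u0 holomorphic_on U0"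
      "\<forall>x\<in>U0. deriv (deriv u0) x - qpot a b c x * u0 x = 0"
    using assms(4) unfolding sl_solution_def by blast
  obtain U1 where U1: "open U1" "Xplus \<subseteq> U1" "0 \<notin> U1" "1 \<notin> U1" "u1 holomorphic_on U1"
      "\<forall>x\<in>U1. deriv (deriv u1) x - qpot a b c x * u1 x = 0"
    using assms(5) unfolding sl_solution_def by blast
  define U where "U = U0 \<inter> U1"
  have U: "open U" "Xplus \<subseteq> U" "0 \<notin> U" "1 \<notin> U"
    using U0(1-4) U1(1-4) by (auto simp: U_def)
  have hol: "u0 holomorphic_on U" "u1 holomorphic_on U"
    using U0(5) U1(5) by (auto simp: U_def intro: holomorphic_on_subset)
  have ode0: "\<And>x. x \<in> U \<Longrightarrow> deriv (deriv u0) x = qpot a b c x * u0 x"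
    using U0(6) by (auto simp: U_def)
  have ode1: "\<And>x. x \<in> U \<Longrightarrow> deriv (deriv u1) x = qpot a b c x * u1 x"
    using U1(6) by (auto simp: U_def)
  have W: "\<And>x. x \<in> Xplus \<Longrightarrow> u0 x * deriv u1 x - deriv u0 x * u1 x \<noteq> 0"
    by (rule global_W[OF U(1,2) hol ode0 ode1 assms(6)])
  have m0: "\<bar>mu0 a b c\<bar> < 1" using assms(1) by (simp add: mu0_def)
  have m1: "\<bar>mu1 a b c\<bar> < 1" using assms(2) by (simp add: mu1_def)
  have mi: "\<bar>muinf a b c\<bar> < 1" using assms(3) by (simp add: muinf_def)
  show ?thesis
    using point0[OF U(1,2,3) hol ode0 ode1 W m0] point1[OF U hol ode0 ode1 W m1]
      pointinf[OF U hol ode0 ode1 W mi] by blast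
qed


end
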